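(* For $a\in\mathbb R\setminus\{0,1\}$, let $\mathfrak g_a$ be the $7$-dimensional nilpotent Lie algebra with basis $\{e_1,\dots,e_7\}$ and dual basis $\{e^1,\dots,e^7\}$ satisfying $$de^1=de^2=0,\ de^3=(1-a)e^{12},\ de^4=e^{13},\ de^5=ae^{14}+e^{23},\ de^6=e^{15}+e^{24},\ de^7=e^{16}+e^{25}+e^{34}.$$ Let $\beta=\frac18\sqrt{123\sqrt{41}-767}$. Then the set $\mathbf S$ of signatures of diagonal metrics on $\mathfrak g_a$ satisfying $\operatorname{Ric}=-\frac12\mathrm{id}+\frac12N$ is: for $a<\frac12-\beta$: $\{\emptyset,12457,1345,1357,234,47\}$; for $\frac12-\beta\le a<0$: $\{\emptyset,12457,125,1345,1357,234,237,47\}$; for $0<a<\frac12$: $\{\emptyset,12457,125,146,1345,1357,234,237,34567,47\}$; for $a=\frac12$: $\{\emptyset,12457,125,1357,146,234,237,34567\}$; for $\frac12<a<1$: $\{\emptyset,123467,12457,125,1357,146,234,237,2456,34567\}$; for $1<a\le\frac12+\beta$: $\{\emptyset,123467,125,1357,146,237,2456,34567\}$; for $\frac12+\beta<a$: $\{\emptyset,123467,1357,146,2456,34567\}$.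
   Context: $d$ is the Chevalley–Eilenberg differential and $e^{ij}=e^i\wedge e^j$; the basis $\{e_i\}$ is a nice basis (each $[e_i,e_j]$ is a multiple of some $e_k$ and each $e_i\lrcorner de^j$ a multiple of some $e^k$). The root matrix $M_\Delta$ has one row for each triple $(\{i,j\},k)$ with $[e_i,e_j]$ a nonzero multiple of $e_k$, with $+1$ in position $k$, $-1$ in positions $i,j$, $0$ elsewhere. $N$ is the diagonal Nikolayevsky derivation: the diagonal matrix (in the basis $\{e_i\}$) with diagonal $M_\Delta^Tb+[1]$, where $b$ solves $M_\Delta M_\Delta^Tb=[1]$ and $[1]$ is the all-ones vector. A diagonal metric is $\sum_i g_ie^i\otimes e^i$ with $g_i\neq0$, and $\operatorname{Ric}$ is its Ricci operator. A signature is recorded as the string of indices $i$ with $g_i<0$ (e.g. $1357$ means $g_1,g_3,g_5,g_7<0$ and the other $g_i>0$); $\emptyset$ denotes the positive definite signature. *)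

theory Defs
  imports Complex_Main
begin

text \<open>A Lie algebra with basis e_1..e_n is encoded by structure constants
  c i j k = coefficient of e_k in [e_i,e_j]. All indices range over {1..n}.\<close>

text \<open>Bracket from the Chevalley-Eilenberg differential: D k i j (for i<j) is the
  coefficient of e^{ij} in de^k; with the convention de^k(X,Y) = - e^k([X,Y]),
  [e_i,e_j] = - sum_k D k i j e_k for i<j (antisymmetric extension).\<close>
definition bracket_of_d :: "(nat \<Rightarrow> nat \<Rightarrow> nat \<Rightarrow> real) \<Rightarrow> nat \<Rightarrow> nat \<Rightarrow> nat \<Rightarrow> real" where
  "bracket_of_d D i j k = (if i < j then - D k i j else if j < i then D k j i else 0)"

definition ga_d :: "real \<Rightarrow> nat \<Rightarrow> nat \<Rightarrow> nat \<Rightarrow> real" where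
  "ga_d a k i j =
     (if (k,i,j) = (3,1,2) then 1 - a
      else if (k,i,j) = (4,1,3) then 1
      else if (k,i,j) = (5,1,4) then a
      else if (k,i,j) = (5,2,3) then 1
      else if (k,i,j) = (6,1,5) then 1
      else if (k,i,j) = (6,2,4) then 1
      else if (k,i,j) = (7,1,6) then 1
      else if (k,i,j) = (7,2,5) then 1
      else if (k,i,j) = (7,3,4) then 1
      else 0)"

definition ga_bracket :: "real \<Rightarrow> nat \<Rightarrow> nat \<Rightarrow> nat \<Rightarrow> real" where
  "ga_bracket a = bracket_of_d (ga_d a)"

text \<open>Levi-Civita connection of the left-invariant diagonal metric sum g_i e^i (x) e^i
  (Koszul formula): LC_coef n c g i j k = coefficient of e_k in nabla_{e_i} e_j.\<close>
definition LC_coef :: "(nat \<Rightarrow> nat \<Rightarrow> nat \<Rightarrow> real) \<Rightarrow> (nat \<Rightarrow> real) \<Rightarrow> nat \<Rightarrow> nat \<Rightarrow> nat \<Rightarrow> real" where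
  "LC_coef c g i j k = (c i j k * g k - c j k i * g i + c k i j * g j) / (2 * g k)"

text \<open>Curvature R(X,Y) = nabla_X nabla_Y - nabla_Y nabla_X - nabla_[X,Y];
  curv_coef n c g i j l p = coefficient of e_p in R(e_i,e_j) e_l.\<close>
definition curv_coef :: "nat \<Rightarrow> (nat \<Rightarrow> nat \<Rightarrow> nat \<Rightarrow> real) \<Rightarrow> (nat \<Rightarrow> real) \<Rightarrow> nat \<Rightarrow> nat \<Rightarrow> nat \<Rightarrow> nat \<Rightarrow> real" where
  "curv_coef n c g i j l p =
     (\<Sum>m\<in>{1..n}. LC_coef c g j l m * LC_coef c g i m p)
   - (\<Sum>m\<in>{1..n}. LC_coef c g i l m * LC_coef c g j m p)
   - (\<Sum>m\<in>{1..n}. c i j m * LC_coef c g m l p)"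

definition ric_tensor :: "nat \<Rightarrow> (nat \<Rightarrow> nat \<Rightarrow> nat \<Rightarrow> real) \<Rightarrow> (nat \<Rightarrow> real) \<Rightarrow> nat \<Rightarrow> nat \<Rightarrow> real" where
  "ric_tensor n c g j l = (\<Sum>i\<in>{1..n}. curv_coef n c g i j l i)"

text \<open>Ricci operator, g(Ric Y, Z) = ric(Y,Z): ricci_op n c g k j = coefficient of e_k in Ric e_j.\<close>
definition ricci_op :: "nat \<Rightarrow> (nat \<Rightarrow> nat \<Rightarrow> nat \<Rightarrow> real) \<Rightarrow> (nat \<Rightarrow> real) \<Rightarrow> nat \<Rightarrow> nat \<Rightarrow> real" where
  "ricci_op n c g k j = ric_tensor n c g j k / g k"

text \<open>Root matrix: one row per triple ({i,j},k) (represented with i<j) such that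
  [e_i,e_j] is a nonzero multiple of e_k.\<close>
definition root_triples :: "nat \<Rightarrow> (nat \<Rightarrow> nat \<Rightarrow> nat \<Rightarrow> real) \<Rightarrow> (nat \<times> nat \<times> nat) set" where
  "root_triples n c = {(i,j,k). 1 \<le> i \<and> i < j \<and> j \<le> n \<and> k \<in> {1..n} \<and> c i j k \<noteq> 0}"

definition root_row :: "nat \<times> nat \<times> nat \<Rightarrow> nat \<Rightarrow> real" where
  "root_row r m = (case r of (i,j,k) \<Rightarrow>
      (if m = k then 1 else 0) - (if m = i then 1 else 0) - (if m = j then 1 else 0))"

text \<open>Diagonal entries of the Nikolayevsky derivation: M^T b + [1] where M M^T b = [1].\<close>
definition nik_diag :: "nat \<Rightarrow> (nat \<Rightarrow> nat \<Rightarrow> nat \<Rightarrow> real) \<Rightarrow> nat \<Rightarrow> real" where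
  "nik_diag n c =
     (let D = root_triples n c;
          b = (SOME b :: nat \<times> nat \<times> nat \<Rightarrow> real. \<forall>r\<in>D.
                 (\<Sum>s\<in>D. (\<Sum>m\<in>{1..n}. root_row r m * root_row s m) * b s) = 1)
      in (\<lambda>m. (\<Sum>r\<in>D. b r * root_row r m) + 1))"

definition ric_condition :: "nat \<Rightarrow> (nat \<Rightarrow> nat \<Rightarrow> nat \<Rightarrow> real) \<Rightarrow> (nat \<Rightarrow> real) \<Rightarrow> bool" where
  "ric_condition n c g \<longleftrightarrow>
     (\<forall>i\<in>{1..n}. g i \<noteq> 0) \<and>
     (\<forall>j\<in>{1..n}. \<forall>k\<in>{1..n}.
        ricci_op n c g k j = (if k = j then - 1/2 + 1/2 * nik_diag n c k else 0))"

definition signature :: "nat \<Rightarrow> (nat \<Rightarrow> real) \<Rightarrow> nat set" where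
  "signature n g = {i\<in>{1..n}. g i < 0}"

definition sig_set :: "nat \<Rightarrow> (nat \<Rightarrow> nat \<Rightarrow> nat \<Rightarrow> real) \<Rightarrow> nat set set" where
  "sig_set n c = {signature n g | g. ric_condition n c g}"

end

theory Submission
  imports Defs
begin

lemma set17: "{1..7::nat} = {1,2,3,4,5,6,7}" by auto
lemma ric_1_1:
  assumes nz: "g 1 \<noteq> 0" "g 2 \<noteq> 0" "g 3 \<noteq> 0" "g 4 \<noteq> 0" "g 5 \<noteq> 0" "g 6 \<noteq> 0" "g 7 \<noteq> (0::real)"
  shows "ricci_op 7 (ga_bracket a) g 1 1 = (0 - ((1-a)^2*g 3/(g 1*g 2)) - (g 4/(g 1*g 3)) - (a^2*g 5/(g 1*g 4)) - (g 6/(g 1*g 5)) - (g 7/(g 1*g 6)))/2"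
  using nz unfolding ricci_op_def ric_tensor_def curv_coef_def LC_coef_def set17
  by (simp add: ga_bracket_def bracket_of_d_def ga_d_def; (simp add: field_simps)?; (simp add: algebra_simps power2_eq_square)?)

lemma ric_1_2:
  assumes nz: "g 1 \<noteq> 0" "g 2 \<noteq> 0" "g 3 \<noteq> 0" "g 4 \<noteq> 0" "g 5 \<noteq> 0" "g 6 \<noteq> 0" "g 7 \<noteq> (0::real)"
  shows "ricci_op 7 (ga_bracket a) g 1 2 = 0"
  using nz unfolding ricci_op_def ric_tensor_def curv_coef_def LC_coef_def set17
  by (simp add: ga_bracket_def bracket_of_d_def ga_d_def; (simp add: field_simps)?; (simp add: algebra_simps power2_eq_square)?)

lemma ric_1_3:
  assumes nz: "g 1 \<noteq> 0" "g 2 \<noteq> 0" "g 3 \<noteq> 0" "g 4 \<noteq> 0" "g 5 \<noteq> 0" "g 6 \<noteq> 0" "g 7 \<noteq> (0::real)"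
  shows "ricci_op 7 (ga_bracket a) g 1 3 = 0"
  using nz unfolding ricci_op_def ric_tensor_def curv_coef_def LC_coef_def set17
  by (simp add: ga_bracket_def bracket_of_d_def ga_d_def; (simp add: field_simps)?; (simp add: algebra_simps power2_eq_square)?)

lemma ric_1_4:
  assumes nz: "g 1 \<noteq> 0" "g 2 \<noteq> 0" "g 3 \<noteq> 0" "g 4 \<noteq> 0" "g 5 \<noteq> 0" "g 6 \<noteq> 0" "g 7 \<noteq> (0::real)"
  shows "ricci_op 7 (ga_bracket a) g 1 4 = 0"
  using nz unfolding ricci_op_def ric_tensor_def curv_coef_def LC_coef_def set17
  by (simp add: ga_bracket_def bracket_of_d_def ga_d_def; (simp add: field_simps)?; (simp add: algebra_simps power2_eq_square)?)

lemma ric_1_5: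
  assumes nz: "g 1 \<noteq> 0" "g 2 \<noteq> 0" "g 3 \<noteq> 0" "g 4 \<noteq> 0" "g 5 \<noteq> 0" "g 6 \<noteq> 0" "g 7 \<noteq> (0::real)"
  shows "ricci_op 7 (ga_bracket a) g 1 5 = 0"
  using nz unfolding ricci_op_def ric_tensor_def curv_coef_def LC_coef_def set17
  by (simp add: ga_bracket_def bracket_of_d_def ga_d_def; (simp add: field_simps)?; (simp add: algebra_simps power2_eq_square)?)

lemma ric_1_6:
  assumes nz: "g 1 \<noteq> 0" "g 2 \<noteq> 0" "g 3 \<noteq> 0" "g 4 \<noteq> 0" "g 5 \<noteq> 0" "g 6 \<noteq> 0" "g 7 \<noteq> (0::real)"
  shows "ricci_op 7 (ga_bracket a) g 1 6 = 0"
  using nz unfolding ricci_op_def ric_tensor_def curv_coef_def LC_coef_def set17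
  by (simp add: ga_bracket_def bracket_of_d_def ga_d_def; (simp add: field_simps)?; (simp add: algebra_simps power2_eq_square)?)

lemma ric_1_7:
  assumes nz: "g 1 \<noteq> 0" "g 2 \<noteq> 0" "g 3 \<noteq> 0" "g 4 \<noteq> 0" "g 5 \<noteq> 0" "g 6 \<noteq> 0" "g 7 \<noteq> (0::real)"
  shows "ricci_op 7 (ga_bracket a) g 1 7 = 0"
  using nz unfolding ricci_op_def ric_tensor_def curv_coef_def LC_coef_def set17
  by (simp add: ga_bracket_def bracket_of_d_def ga_d_def; (simp add: field_simps)?; (simp add: algebra_simps power2_eq_square)?)

lemma ric_2_1:
  assumes nz: "g 1 \<noteq> 0" "g 2 \<noteq> 0" "g 3 \<noteq> 0" "g 4 \<noteq> 0" "g 5 \<noteq> 0" "g 6 \<noteq> 0" "g 7 \<noteq> (0::real)"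
  shows "ricci_op 7 (ga_bracket a) g 2 1 = 0"
  using nz unfolding ricci_op_def ric_tensor_def curv_coef_def LC_coef_def set17
  by (simp add: ga_bracket_def bracket_of_d_def ga_d_def; (simp add: field_simps)?; (simp add: algebra_simps power2_eq_square)?)

lemma ric_2_2:
  assumes nz: "g 1 \<noteq> 0" "g 2 \<noteq> 0" "g 3 \<noteq> 0" "g 4 \<noteq> 0" "g 5 \<noteq> 0" "g 6 \<noteq> 0" "g 7 \<noteq> (0::real)"
  shows "ricci_op 7 (ga_bracket a) g 2 2 = (0 - ((1-a)^2*g 3/(g 1*g 2)) - (g 5/(g 2*g 3)) - (g 6/(g 2*g 4)) - (g 7/(g 2*g 5)))/2"
  using nz unfolding ricci_op_def ric_tensor_def curv_coef_def LC_coef_def set17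
  by (simp add: ga_bracket_def bracket_of_d_def ga_d_def; (simp add: field_simps)?; (simp add: algebra_simps power2_eq_square)?)

lemma ric_2_3:
  assumes nz: "g 1 \<noteq> 0" "g 2 \<noteq> 0" "g 3 \<noteq> 0" "g 4 \<noteq> 0" "g 5 \<noteq> 0" "g 6 \<noteq> 0" "g 7 \<noteq> (0::real)"
  shows "ricci_op 7 (ga_bracket a) g 2 3 = 0"
  using nz unfolding ricci_op_def ric_tensor_def curv_coef_def LC_coef_def set17
  by (simp add: ga_bracket_def bracket_of_d_def ga_d_def; (simp add: field_simps)?; (simp add: algebra_simps power2_eq_square)?)

lemma ric_2_4:
  assumes nz: "g 1 \<noteq> 0" "g 2 \<noteq> 0" "g 3 \<noteq> 0" "g 4 \<noteq> 0" "g 5 \<noteq> 0" "g 6 \<noteq> 0" "g 7 \<noteq> (0::real)"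
  shows "ricci_op 7 (ga_bracket a) g 2 4 = 0"
  using nz unfolding ricci_op_def ric_tensor_def curv_coef_def LC_coef_def set17
  by (simp add: ga_bracket_def bracket_of_d_def ga_d_def; (simp add: field_simps)?; (simp add: algebra_simps power2_eq_square)?)

lemma ric_2_5:
  assumes nz: "g 1 \<noteq> 0" "g 2 \<noteq> 0" "g 3 \<noteq> 0" "g 4 \<noteq> 0" "g 5 \<noteq> 0" "g 6 \<noteq> 0" "g 7 \<noteq> (0::real)"
  shows "ricci_op 7 (ga_bracket a) g 2 5 = 0"
  using nz unfolding ricci_op_def ric_tensor_def curv_coef_def LC_coef_def set17
  by (simp add: ga_bracket_def bracket_of_d_def ga_d_def; (simp add: field_simps)?; (simp add: algebra_simps power2_eq_square)?)

lemma ric_2_6: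
  assumes nz: "g 1 \<noteq> 0" "g 2 \<noteq> 0" "g 3 \<noteq> 0" "g 4 \<noteq> 0" "g 5 \<noteq> 0" "g 6 \<noteq> 0" "g 7 \<noteq> (0::real)"
  shows "ricci_op 7 (ga_bracket a) g 2 6 = 0"
  using nz unfolding ricci_op_def ric_tensor_def curv_coef_def LC_coef_def set17
  by (simp add: ga_bracket_def bracket_of_d_def ga_d_def; (simp add: field_simps)?; (simp add: algebra_simps power2_eq_square)?)

lemma ric_2_7:
  assumes nz: "g 1 \<noteq> 0" "g 2 \<noteq> 0" "g 3 \<noteq> 0" "g 4 \<noteq> 0" "g 5 \<noteq> 0" "g 6 \<noteq> 0" "g 7 \<noteq> (0::real)"
  shows "ricci_op 7 (ga_bracket a) g 2 7 = 0"
  using nz unfolding ricci_op_def ric_tensor_def curv_coef_def LC_coef_def set17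
  by (simp add: ga_bracket_def bracket_of_d_def ga_d_def; (simp add: field_simps)?; (simp add: algebra_simps power2_eq_square)?)

lemma ric_3_1:
  assumes nz: "g 1 \<noteq> 0" "g 2 \<noteq> 0" "g 3 \<noteq> 0" "g 4 \<noteq> 0" "g 5 \<noteq> 0" "g 6 \<noteq> 0" "g 7 \<noteq> (0::real)"
  shows "ricci_op 7 (ga_bracket a) g 3 1 = 0"
  using nz unfolding ricci_op_def ric_tensor_def curv_coef_def LC_coef_def set17
  by (simp add: ga_bracket_def bracket_of_d_def ga_d_def; (simp add: field_simps)?; (simp add: algebra_simps power2_eq_square)?)

lemma ric_3_2:
  assumes nz: "g 1 \<noteq> 0" "g 2 \<noteq> 0" "g 3 \<noteq> 0" "g 4 \<noteq> 0" "g 5 \<noteq> 0" "g 6 \<noteq> 0" "g 7 \<noteq> (0::real)"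
  shows "ricci_op 7 (ga_bracket a) g 3 2 = 0"
  using nz unfolding ricci_op_def ric_tensor_def curv_coef_def LC_coef_def set17
  by (simp add: ga_bracket_def bracket_of_d_def ga_d_def; (simp add: field_simps)?; (simp add: algebra_simps power2_eq_square)?)

lemma ric_3_3:
  assumes nz: "g 1 \<noteq> 0" "g 2 \<noteq> 0" "g 3 \<noteq> 0" "g 4 \<noteq> 0" "g 5 \<noteq> 0" "g 6 \<noteq> 0" "g 7 \<noteq> (0::real)"
  shows "ricci_op 7 (ga_bracket a) g 3 3 = (0 + ((1-a)^2*g 3/(g 1*g 2)) - (g 4/(g 1*g 3)) - (g 5/(g 2*g 3)) - (g 7/(g 3*g 4)))/2"
  using nz unfolding ricci_op_def ric_tensor_def curv_coef_def LC_coef_def set17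
  by (simp add: ga_bracket_def bracket_of_d_def ga_d_def; (simp add: field_simps)?; (simp add: algebra_simps power2_eq_square)?)

lemma ric_3_4:
  assumes nz: "g 1 \<noteq> 0" "g 2 \<noteq> 0" "g 3 \<noteq> 0" "g 4 \<noteq> 0" "g 5 \<noteq> 0" "g 6 \<noteq> 0" "g 7 \<noteq> (0::real)"
  shows "ricci_op 7 (ga_bracket a) g 3 4 = 0"
  using nz unfolding ricci_op_def ric_tensor_def curv_coef_def LC_coef_def set17
  by (simp add: ga_bracket_def bracket_of_d_def ga_d_def; (simp add: field_simps)?; (simp add: algebra_simps power2_eq_square)?)

lemma ric_3_5:
  assumes nz: "g 1 \<noteq> 0" "g 2 \<noteq> 0" "g 3 \<noteq> 0" "g 4 \<noteq> 0" "g 5 \<noteq> 0" "g 6 \<noteq> 0" "g 7 \<noteq> (0::real)"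
  shows "ricci_op 7 (ga_bracket a) g 3 5 = 0"
  using nz unfolding ricci_op_def ric_tensor_def curv_coef_def LC_coef_def set17
  by (simp add: ga_bracket_def bracket_of_d_def ga_d_def; (simp add: field_simps)?; (simp add: algebra_simps power2_eq_square)?)

lemma ric_3_6:
  assumes nz: "g 1 \<noteq> 0" "g 2 \<noteq> 0" "g 3 \<noteq> 0" "g 4 \<noteq> 0" "g 5 \<noteq> 0" "g 6 \<noteq> 0" "g 7 \<noteq> (0::real)"
  shows "ricci_op 7 (ga_bracket a) g 3 6 = 0"
  using nz unfolding ricci_op_def ric_tensor_def curv_coef_def LC_coef_def set17
  by (simp add: ga_bracket_def bracket_of_d_def ga_d_def; (simp add: field_simps)?; (simp add: algebra_simps power2_eq_square)?)

lemma ric_3_7: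
  assumes nz: "g 1 \<noteq> 0" "g 2 \<noteq> 0" "g 3 \<noteq> 0" "g 4 \<noteq> 0" "g 5 \<noteq> 0" "g 6 \<noteq> 0" "g 7 \<noteq> (0::real)"
  shows "ricci_op 7 (ga_bracket a) g 3 7 = 0"
  using nz unfolding ricci_op_def ric_tensor_def curv_coef_def LC_coef_def set17
  by (simp add: ga_bracket_def bracket_of_d_def ga_d_def; (simp add: field_simps)?; (simp add: algebra_simps power2_eq_square)?)

lemma ric_4_1:
  assumes nz: "g 1 \<noteq> 0" "g 2 \<noteq> 0" "g 3 \<noteq> 0" "g 4 \<noteq> 0" "g 5 \<noteq> 0" "g 6 \<noteq> 0" "g 7 \<noteq> (0::real)"
  shows "ricci_op 7 (ga_bracket a) g 4 1 = 0"
  using nz unfolding ricci_op_def ric_tensor_def curv_coef_def LC_coef_def set17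
  by (simp add: ga_bracket_def bracket_of_d_def ga_d_def; (simp add: field_simps)?; (simp add: algebra_simps power2_eq_square)?)

lemma ric_4_2:
  assumes nz: "g 1 \<noteq> 0" "g 2 \<noteq> 0" "g 3 \<noteq> 0" "g 4 \<noteq> 0" "g 5 \<noteq> 0" "g 6 \<noteq> 0" "g 7 \<noteq> (0::real)"
  shows "ricci_op 7 (ga_bracket a) g 4 2 = 0"
  using nz unfolding ricci_op_def ric_tensor_def curv_coef_def LC_coef_def set17
  by (simp add: ga_bracket_def bracket_of_d_def ga_d_def; (simp add: field_simps)?; (simp add: algebra_simps power2_eq_square)?)

lemma ric_4_3:
  assumes nz: "g 1 \<noteq> 0" "g 2 \<noteq> 0" "g 3 \<noteq> 0" "g 4 \<noteq> 0" "g 5 \<noteq> 0" "g 6 \<noteq> 0" "g 7 \<noteq> (0::real)"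
  shows "ricci_op 7 (ga_bracket a) g 4 3 = 0"
  using nz unfolding ricci_op_def ric_tensor_def curv_coef_def LC_coef_def set17
  by (simp add: ga_bracket_def bracket_of_d_def ga_d_def; (simp add: field_simps)?; (simp add: algebra_simps power2_eq_square)?)

lemma ric_4_4:
  assumes nz: "g 1 \<noteq> 0" "g 2 \<noteq> 0" "g 3 \<noteq> 0" "g 4 \<noteq> 0" "g 5 \<noteq> 0" "g 6 \<noteq> 0" "g 7 \<noteq> (0::real)"
  shows "ricci_op 7 (ga_bracket a) g 4 4 = (0 + (g 4/(g 1*g 3)) - (a^2*g 5/(g 1*g 4)) - (g 6/(g 2*g 4)) - (g 7/(g 3*g 4)))/2"
  using nz unfolding ricci_op_def ric_tensor_def curv_coef_def LC_coef_def set17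
  by (simp add: ga_bracket_def bracket_of_d_def ga_d_def; (simp add: field_simps)?; (simp add: algebra_simps power2_eq_square)?)

lemma ric_4_5:
  assumes nz: "g 1 \<noteq> 0" "g 2 \<noteq> 0" "g 3 \<noteq> 0" "g 4 \<noteq> 0" "g 5 \<noteq> 0" "g 6 \<noteq> 0" "g 7 \<noteq> (0::real)"
  shows "ricci_op 7 (ga_bracket a) g 4 5 = 0"
  using nz unfolding ricci_op_def ric_tensor_def curv_coef_def LC_coef_def set17
  by (simp add: ga_bracket_def bracket_of_d_def ga_d_def; (simp add: field_simps)?; (simp add: algebra_simps power2_eq_square)?)

lemma ric_4_6:
  assumes nz: "g 1 \<noteq> 0" "g 2 \<noteq> 0" "g 3 \<noteq> 0" "g 4 \<noteq> 0" "g 5 \<noteq> 0" "g 6 \<noteq> 0" "g 7 \<noteq> (0::real)"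
  shows "ricci_op 7 (ga_bracket a) g 4 6 = 0"
  using nz unfolding ricci_op_def ric_tensor_def curv_coef_def LC_coef_def set17
  by (simp add: ga_bracket_def bracket_of_d_def ga_d_def; (simp add: field_simps)?; (simp add: algebra_simps power2_eq_square)?)

lemma ric_4_7:
  assumes nz: "g 1 \<noteq> 0" "g 2 \<noteq> 0" "g 3 \<noteq> 0" "g 4 \<noteq> 0" "g 5 \<noteq> 0" "g 6 \<noteq> 0" "g 7 \<noteq> (0::real)"
  shows "ricci_op 7 (ga_bracket a) g 4 7 = 0"
  using nz unfolding ricci_op_def ric_tensor_def curv_coef_def LC_coef_def set17
  by (simp add: ga_bracket_def bracket_of_d_def ga_d_def; (simp add: field_simps)?; (simp add: algebra_simps power2_eq_square)?)

lemma ric_5_1: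
  assumes nz: "g 1 \<noteq> 0" "g 2 \<noteq> 0" "g 3 \<noteq> 0" "g 4 \<noteq> 0" "g 5 \<noteq> 0" "g 6 \<noteq> 0" "g 7 \<noteq> (0::real)"
  shows "ricci_op 7 (ga_bracket a) g 5 1 = 0"
  using nz unfolding ricci_op_def ric_tensor_def curv_coef_def LC_coef_def set17
  by (simp add: ga_bracket_def bracket_of_d_def ga_d_def; (simp add: field_simps)?; (simp add: algebra_simps power2_eq_square)?)

lemma ric_5_2:
  assumes nz: "g 1 \<noteq> 0" "g 2 \<noteq> 0" "g 3 \<noteq> 0" "g 4 \<noteq> 0" "g 5 \<noteq> 0" "g 6 \<noteq> 0" "g 7 \<noteq> (0::real)"
  shows "ricci_op 7 (ga_bracket a) g 5 2 = 0"
  using nz unfolding ricci_op_def ric_tensor_def curv_coef_def LC_coef_def set17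
  by (simp add: ga_bracket_def bracket_of_d_def ga_d_def; (simp add: field_simps)?; (simp add: algebra_simps power2_eq_square)?)

lemma ric_5_3:
  assumes nz: "g 1 \<noteq> 0" "g 2 \<noteq> 0" "g 3 \<noteq> 0" "g 4 \<noteq> 0" "g 5 \<noteq> 0" "g 6 \<noteq> 0" "g 7 \<noteq> (0::real)"
  shows "ricci_op 7 (ga_bracket a) g 5 3 = 0"
  using nz unfolding ricci_op_def ric_tensor_def curv_coef_def LC_coef_def set17
  by (simp add: ga_bracket_def bracket_of_d_def ga_d_def; (simp add: field_simps)?; (simp add: algebra_simps power2_eq_square)?)

lemma ric_5_4:
  assumes nz: "g 1 \<noteq> 0" "g 2 \<noteq> 0" "g 3 \<noteq> 0" "g 4 \<noteq> 0" "g 5 \<noteq> 0" "g 6 \<noteq> 0" "g 7 \<noteq> (0::real)"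
  shows "ricci_op 7 (ga_bracket a) g 5 4 = 0"
  using nz unfolding ricci_op_def ric_tensor_def curv_coef_def LC_coef_def set17
  by (simp add: ga_bracket_def bracket_of_d_def ga_d_def; (simp add: field_simps)?; (simp add: algebra_simps power2_eq_square)?)

lemma ric_5_5:
  assumes nz: "g 1 \<noteq> 0" "g 2 \<noteq> 0" "g 3 \<noteq> 0" "g 4 \<noteq> 0" "g 5 \<noteq> 0" "g 6 \<noteq> 0" "g 7 \<noteq> (0::real)"
  shows "ricci_op 7 (ga_bracket a) g 5 5 = (0 + (a^2*g 5/(g 1*g 4)) + (g 5/(g 2*g 3)) - (g 6/(g 1*g 5)) - (g 7/(g 2*g 5)))/2"
  using nz unfolding ricci_op_def ric_tensor_def curv_coef_def LC_coef_def set17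
  by (simp add: ga_bracket_def bracket_of_d_def ga_d_def; (simp add: field_simps)?; (simp add: algebra_simps power2_eq_square)?)

lemma ric_5_6:
  assumes nz: "g 1 \<noteq> 0" "g 2 \<noteq> 0" "g 3 \<noteq> 0" "g 4 \<noteq> 0" "g 5 \<noteq> 0" "g 6 \<noteq> 0" "g 7 \<noteq> (0::real)"
  shows "ricci_op 7 (ga_bracket a) g 5 6 = 0"
  using nz unfolding ricci_op_def ric_tensor_def curv_coef_def LC_coef_def set17
  by (simp add: ga_bracket_def bracket_of_d_def ga_d_def; (simp add: field_simps)?; (simp add: algebra_simps power2_eq_square)?)

lemma ric_5_7:
  assumes nz: "g 1 \<noteq> 0" "g 2 \<noteq> 0" "g 3 \<noteq> 0" "g 4 \<noteq> 0" "g 5 \<noteq> 0" "g 6 \<noteq> 0" "g 7 \<noteq> (0::real)"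
  shows "ricci_op 7 (ga_bracket a) g 5 7 = 0"
  using nz unfolding ricci_op_def ric_tensor_def curv_coef_def LC_coef_def set17
  by (simp add: ga_bracket_def bracket_of_d_def ga_d_def; (simp add: field_simps)?; (simp add: algebra_simps power2_eq_square)?)

lemma ric_6_1:
  assumes nz: "g 1 \<noteq> 0" "g 2 \<noteq> 0" "g 3 \<noteq> 0" "g 4 \<noteq> 0" "g 5 \<noteq> 0" "g 6 \<noteq> 0" "g 7 \<noteq> (0::real)"
  shows "ricci_op 7 (ga_bracket a) g 6 1 = 0"
  using nz unfolding ricci_op_def ric_tensor_def curv_coef_def LC_coef_def set17
  by (simp add: ga_bracket_def bracket_of_d_def ga_d_def; (simp add: field_simps)?; (simp add: algebra_simps power2_eq_square)?)

lemma ric_6_2: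
  assumes nz: "g 1 \<noteq> 0" "g 2 \<noteq> 0" "g 3 \<noteq> 0" "g 4 \<noteq> 0" "g 5 \<noteq> 0" "g 6 \<noteq> 0" "g 7 \<noteq> (0::real)"
  shows "ricci_op 7 (ga_bracket a) g 6 2 = 0"
  using nz unfolding ricci_op_def ric_tensor_def curv_coef_def LC_coef_def set17
  by (simp add: ga_bracket_def bracket_of_d_def ga_d_def; (simp add: field_simps)?; (simp add: algebra_simps power2_eq_square)?)

lemma ric_6_3:
  assumes nz: "g 1 \<noteq> 0" "g 2 \<noteq> 0" "g 3 \<noteq> 0" "g 4 \<noteq> 0" "g 5 \<noteq> 0" "g 6 \<noteq> 0" "g 7 \<noteq> (0::real)"
  shows "ricci_op 7 (ga_bracket a) g 6 3 = 0"
  using nz unfolding ricci_op_def ric_tensor_def curv_coef_def LC_coef_def set17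
  by (simp add: ga_bracket_def bracket_of_d_def ga_d_def; (simp add: field_simps)?; (simp add: algebra_simps power2_eq_square)?)

lemma ric_6_4:
  assumes nz: "g 1 \<noteq> 0" "g 2 \<noteq> 0" "g 3 \<noteq> 0" "g 4 \<noteq> 0" "g 5 \<noteq> 0" "g 6 \<noteq> 0" "g 7 \<noteq> (0::real)"
  shows "ricci_op 7 (ga_bracket a) g 6 4 = 0"
  using nz unfolding ricci_op_def ric_tensor_def curv_coef_def LC_coef_def set17
  by (simp add: ga_bracket_def bracket_of_d_def ga_d_def; (simp add: field_simps)?; (simp add: algebra_simps power2_eq_square)?)

lemma ric_6_5:
  assumes nz: "g 1 \<noteq> 0" "g 2 \<noteq> 0" "g 3 \<noteq> 0" "g 4 \<noteq> 0" "g 5 \<noteq> 0" "g 6 \<noteq> 0" "g 7 \<noteq> (0::real)"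
  shows "ricci_op 7 (ga_bracket a) g 6 5 = 0"
  using nz unfolding ricci_op_def ric_tensor_def curv_coef_def LC_coef_def set17
  by (simp add: ga_bracket_def bracket_of_d_def ga_d_def; (simp add: field_simps)?; (simp add: algebra_simps power2_eq_square)?)

lemma ric_6_6:
  assumes nz: "g 1 \<noteq> 0" "g 2 \<noteq> 0" "g 3 \<noteq> 0" "g 4 \<noteq> 0" "g 5 \<noteq> 0" "g 6 \<noteq> 0" "g 7 \<noteq> (0::real)"
  shows "ricci_op 7 (ga_bracket a) g 6 6 = (0 + (g 6/(g 1*g 5)) + (g 6/(g 2*g 4)) - (g 7/(g 1*g 6)))/2"
  using nz unfolding ricci_op_def ric_tensor_def curv_coef_def LC_coef_def set17
  by (simp add: ga_bracket_def bracket_of_d_def ga_d_def; (simp add: field_simps)?; (simp add: algebra_simps power2_eq_square)?)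

lemma ric_6_7:
  assumes nz: "g 1 \<noteq> 0" "g 2 \<noteq> 0" "g 3 \<noteq> 0" "g 4 \<noteq> 0" "g 5 \<noteq> 0" "g 6 \<noteq> 0" "g 7 \<noteq> (0::real)"
  shows "ricci_op 7 (ga_bracket a) g 6 7 = 0"
  using nz unfolding ricci_op_def ric_tensor_def curv_coef_def LC_coef_def set17
  by (simp add: ga_bracket_def bracket_of_d_def ga_d_def; (simp add: field_simps)?; (simp add: algebra_simps power2_eq_square)?)

lemma ric_7_1:
  assumes nz: "g 1 \<noteq> 0" "g 2 \<noteq> 0" "g 3 \<noteq> 0" "g 4 \<noteq> 0" "g 5 \<noteq> 0" "g 6 \<noteq> 0" "g 7 \<noteq> (0::real)"
  shows "ricci_op 7 (ga_bracket a) g 7 1 = 0"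
  using nz unfolding ricci_op_def ric_tensor_def curv_coef_def LC_coef_def set17
  by (simp add: ga_bracket_def bracket_of_d_def ga_d_def; (simp add: field_simps)?; (simp add: algebra_simps power2_eq_square)?)

lemma ric_7_2:
  assumes nz: "g 1 \<noteq> 0" "g 2 \<noteq> 0" "g 3 \<noteq> 0" "g 4 \<noteq> 0" "g 5 \<noteq> 0" "g 6 \<noteq> 0" "g 7 \<noteq> (0::real)"
  shows "ricci_op 7 (ga_bracket a) g 7 2 = 0"
  using nz unfolding ricci_op_def ric_tensor_def curv_coef_def LC_coef_def set17
  by (simp add: ga_bracket_def bracket_of_d_def ga_d_def; (simp add: field_simps)?; (simp add: algebra_simps power2_eq_square)?)

lemma ric_7_3:
  assumes nz: "g 1 \<noteq> 0" "g 2 \<noteq> 0" "g 3 \<noteq> 0" "g 4 \<noteq> 0" "g 5 \<noteq> 0" "g 6 \<noteq> 0" "g 7 \<noteq> (0::real)"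
  shows "ricci_op 7 (ga_bracket a) g 7 3 = 0"
  using nz unfolding ricci_op_def ric_tensor_def curv_coef_def LC_coef_def set17
  by (simp add: ga_bracket_def bracket_of_d_def ga_d_def; (simp add: field_simps)?; (simp add: algebra_simps power2_eq_square)?)

lemma ric_7_4:
  assumes nz: "g 1 \<noteq> 0" "g 2 \<noteq> 0" "g 3 \<noteq> 0" "g 4 \<noteq> 0" "g 5 \<noteq> 0" "g 6 \<noteq> 0" "g 7 \<noteq> (0::real)"
  shows "ricci_op 7 (ga_bracket a) g 7 4 = 0"
  using nz unfolding ricci_op_def ric_tensor_def curv_coef_def LC_coef_def set17
  by (simp add: ga_bracket_def bracket_of_d_def ga_d_def; (simp add: field_simps)?; (simp add: algebra_simps power2_eq_square)?)

lemma ric_7_5: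
  assumes nz: "g 1 \<noteq> 0" "g 2 \<noteq> 0" "g 3 \<noteq> 0" "g 4 \<noteq> 0" "g 5 \<noteq> 0" "g 6 \<noteq> 0" "g 7 \<noteq> (0::real)"
  shows "ricci_op 7 (ga_bracket a) g 7 5 = 0"
  using nz unfolding ricci_op_def ric_tensor_def curv_coef_def LC_coef_def set17
  by (simp add: ga_bracket_def bracket_of_d_def ga_d_def; (simp add: field_simps)?; (simp add: algebra_simps power2_eq_square)?)

lemma ric_7_6:
  assumes nz: "g 1 \<noteq> 0" "g 2 \<noteq> 0" "g 3 \<noteq> 0" "g 4 \<noteq> 0" "g 5 \<noteq> 0" "g 6 \<noteq> 0" "g 7 \<noteq> (0::real)"
  shows "ricci_op 7 (ga_bracket a) g 7 6 = 0"
  using nz unfolding ricci_op_def ric_tensor_def curv_coef_def LC_coef_def set17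
  by (simp add: ga_bracket_def bracket_of_d_def ga_d_def; (simp add: field_simps)?; (simp add: algebra_simps power2_eq_square)?)

lemma ric_7_7:
  assumes nz: "g 1 \<noteq> 0" "g 2 \<noteq> 0" "g 3 \<noteq> 0" "g 4 \<noteq> 0" "g 5 \<noteq> 0" "g 6 \<noteq> 0" "g 7 \<noteq> (0::real)"
  shows "ricci_op 7 (ga_bracket a) g 7 7 = (0 + (g 7/(g 1*g 6)) + (g 7/(g 2*g 5)) + (g 7/(g 3*g 4)))/2"
  using nz unfolding ricci_op_def ric_tensor_def curv_coef_def LC_coef_def set17
  by (simp add: ga_bracket_def bracket_of_d_def ga_d_def; (simp add: field_simps)?; (simp add: algebra_simps power2_eq_square)?)

definition T9 :: "(nat \<times> nat \<times> nat) set" where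
  "T9 = {(1,2,3),(1,3,4),(1,4,5),(2,3,5),(1,5,6),(2,4,6),(1,6,7),(2,5,7),(3,4,7)}"

lemma root_triples_ga:
  assumes "a \<noteq> 0" "a \<noteq> 1"
  shows "root_triples 7 (ga_bracket a) = T9"
proof (rule set_eqI)
  fix t :: "nat \<times> nat \<times> nat"
  obtain i j k where t: "t = (i,j,k)" by (cases t) auto
  show "t \<in> root_triples 7 (ga_bracket a) \<longleftrightarrow> t \<in> T9"
  proof
    assume "t \<in> root_triples 7 (ga_bracket a)"
    then have h: "1 \<le> i" "i < j" "j \<le> 7" "k \<in> {1..7}" "ga_bracket a i j k \<noteq> 0"
      unfolding root_triples_def t by auto
    then show "t \<in> T9" unfolding t T9_def
      by (auto simp: ga_bracket_def bracket_of_d_def ga_d_def split: if_splits)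
  next
    assume "t \<in> T9"
    then show "t \<in> root_triples 7 (ga_bracket a)" using assms
      unfolding t T9_def root_triples_def
      by (auto simp: ga_bracket_def bracket_of_d_def ga_d_def)
  qed
qed

lemma nik_ga:
  assumes "a \<noteq> 0" "a \<noteq> 1" "m \<in> {1..7}"
  shows "nik_diag 7 (ga_bracket a) m = real m / 5"
proof -
  define P where "P = (\<lambda>b :: nat \<times> nat \<times> nat \<Rightarrow> real. \<forall>r\<in>T9.
                 (\<Sum>s\<in>T9. (\<Sum>m\<in>{1..7}. root_row r m * root_row s m) * b s) = 1)"
  define b0 :: "nat \<times> nat \<times> nat \<Rightarrow> real" where
    "b0 = (\<lambda>t. if t = (1,3,4) then -1/5 else if t = (2,3,5) then 3/5 else if t = (1,5,6) then 3/5
              else if t = (1,6,7) then 2/5 else 0)"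
  have "P b0" unfolding P_def T9_def b0_def set17 by (simp add: root_row_def)
  then have Pb: "P (SOME b. P b)" by (metis someI)
  define b where "b = (SOME b. P b)"
  have eqs: "P b" using Pb b_def by simp
  then have e: "(\<Sum>s\<in>T9. (\<Sum>m\<in>{1..7}. root_row r m * root_row s m) * b s) = 1" if "r \<in> T9" for r
    using that unfolding P_def by blast
  have E: "(\<Sum>s\<in>T9. (\<Sum>m\<in>{1..7}. root_row r m * root_row s m) * b s) = 1"
    if "r \<in> {(1,2,3),(1,3,4),(1,4,5),(2,3,5),(1,5,6),(2,4,6),(1,6,7),(2,5,7),(3,4,7)}" for r
    using e that unfolding T9_def by blast
  note E' = E[of "(1,2,3)"] E[of "(1,3,4)"] E[of "(1,4,5)"] E[of "(2,3,5)"] E[of "(1,5,6)"]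
     E[of "(2,4,6)"] E[of "(1,6,7)"] E[of "(2,5,7)"] E[of "(3,4,7)"]
  have E2: "(\<Sum>s\<in>T9. (\<Sum>m\<in>{1..7}. root_row r m * root_row s m) * b s) = 1" if "r \<in> T9" for r
    using e that by blast
  have nd: "nik_diag 7 (ga_bracket a) m = (\<Sum>r\<in>T9. b r * root_row r m) + 1"
    unfolding nik_diag_def root_triples_ga[OF assms(1,2)] Let_def b_def P_def by simp
  from assms(3) have "m \<in> {1,2,3,4,5,6,7}" by auto
  then show ?thesis unfolding nd using E'
    unfolding T9_def set17 by (auto simp: root_row_def)
qed

definition Kst :: real where "Kst = (123 * sqrt 41 - 767) / 16"

lemma sqrt41_gt: "sqrt 41 > (6.4::real)"
  by (rule real_less_rsqrt) (simp add: power2_eq_square)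

lemma Kst_identity:
  "Kst*(2/5-v)^2*(4/25-3*v/5) - (v-4/25)^2 = (v - (1 - sqrt 41)/25)^2 * ((9*sqrt 41-57)/4 - 3*Kst*v/5)"
proof -
  define s where "s = sqrt 41"
  have s2: "s ^ 2 = (41::real)" unfolding s_def by simp
  have "(123 * s - 767) / 16 * (2 / 5 - v)^2 * (4 / 25 - 3 * v / 5) - (v - 4 / 25)^2 -
     (v - (1 - s) / 25)^2 * ((9 * s - 57) / 4 - 3 * ((123 * s - 767) / 16) * v / 5)
   = (s^2 - 41) * (3/100 - 9/2500*s - 12039/50000*v + 369/50000*v*s + 369/1000*v^2)"
    by algebra
  then show ?thesis unfolding Kst_def s_def[symmetric] using s2 by simp
qed

lemma Kst_pos: "Kst > 1"
  using sqrt41_gt unfolding Kst_def by simp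

lemma gam_pos: "(9*sqrt 41-57)/4 > (0::real)"
  using sqrt41_gt by simp

lemma Kst_bound:
  assumes "v < 0"
  shows "(v-4/25)^2 \<le> Kst*(2/5-v)^2*(4/25-3*v/5)"
proof -
  have "Kst * v < 0" using Kst_pos assms by (simp add: mult_pos_neg)
  then have "(9*sqrt 41-57)/4 - 3*Kst*v/5 \<ge> 0" using gam_pos by linarith
  then have "(v - (1 - sqrt 41)/25)^2 * ((9*sqrt 41-57)/4 - 3*Kst*v/5) \<ge> 0"
    by simp
  then show ?thesis using Kst_identity[of v] by linarith
qed

lemma Kst_vm:
  "((1 - sqrt 41)/25-4/25)^2 = Kst*(2/5-(1 - sqrt 41)/25)^2*(4/25-3*((1 - sqrt 41)/25)/5)"
  using Kst_identity[of "(1 - sqrt 41)/25"] by simp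

lemma beta_iff:
  fixes a :: real
  shows "(1/2 - sqrt (123 * sqrt 41 - 767) / 8 \<le> a \<and> a \<le> 1/2 + sqrt (123 * sqrt 41 - 767) / 8)
     \<longleftrightarrow> (1-2*a)^2 \<le> Kst"
proof -
  define B where "B = sqrt (123 * sqrt 41 - 767) / 8"
  have pos: "123 * sqrt 41 - 767 \<ge> (0::real)" using sqrt41_gt by linarith
  have B0: "B \<ge> 0" unfolding B_def using pos by simp
  have sq: "sqrt (123 * sqrt 41 - 767) ^ 2 = 123 * sqrt 41 - 767" using pos by simp
  have B2: "(2*B)^2 = Kst" unfolding B_def Kst_def using sq by (simp add: power_divide)
  have "(1/2 - B \<le> a \<and> a \<le> 1/2 + B) \<longleftrightarrow> \<bar>1-2*a\<bar> \<le> \<bar>2*B\<bar>" using B0 by auto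
  also have "\<dots> \<longleftrightarrow> (1-2*a)^2 \<le> (2*B)^2" by (rule abs_le_square_iff)
  finally show ?thesis using B2 unfolding B_def by simp
qed

lemma cubic1: "((v::real)-4/25)^2 - (2/5-v)^2*(4/25-3*v/5) = 3/5*v*(v-1/5)*(v+4/5)"
  by algebra


definition SOL :: "real \<Rightarrow> real \<Rightarrow> real \<Rightarrow> real \<Rightarrow> real \<Rightarrow> real \<Rightarrow> real \<Rightarrow> real \<Rightarrow> real \<Rightarrow> real \<Rightarrow> bool" where
  "SOL a x0 x1 x2 x3 x4 x5 x6 x7 x8 \<longleftrightarrow>
     x0 \<noteq> 0 \<and> x1 \<noteq> 0 \<and> x2 \<noteq> 0 \<and> x3 \<noteq> 0 \<and> x4 \<noteq> 0 \<and> x5 \<noteq> 0 \<and> x6 \<noteq> 0 \<and> x7 \<noteq> 0 \<and> x8 \<noteq> 0 \<and>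
     x0+x1+x2+x4+x6 = 4/5 \<and> x0+x3+x5+x7 = 3/5 \<and> x0-x1-x3-x8 = -2/5 \<and> x1-x2-x5-x8 = -1/5 \<and>
     x2+x3-x4-x7 = 0 \<and> x4+x5-x6 = 1/5 \<and> x6+x7+x8 = 2/5 \<and>
     x1*x5 = x3*x4 \<and> x1*x2*x7 = a^2*x3*x4*x6 \<and> x0*x1*x8 = (1-a)^2*x3*x4*x6"

definition cA :: "real \<Rightarrow> real \<Rightarrow> real \<Rightarrow> real \<Rightarrow> real \<Rightarrow> bool" where
  "cA a x0 x1 x2 x6 \<longleftrightarrow> x1>0 \<and> x6>0 \<and> (x0>0 \<longleftrightarrow> a<1) \<and> (x2>0 \<longleftrightarrow> a>0)"
definition cB :: "real \<Rightarrow> real \<Rightarrow> real \<Rightarrow> real \<Rightarrow> real \<Rightarrow> bool" where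
  "cB a x0 x1 x2 x6 \<longleftrightarrow> x1<0 \<and> x6<0 \<and> (x0>0 \<longleftrightarrow> a<1) \<and> (x2>0 \<longleftrightarrow> a>0)"
definition cC :: "real \<Rightarrow> real \<Rightarrow> real \<Rightarrow> real \<Rightarrow> real \<Rightarrow> bool" where
  "cC a x0 x1 x2 x6 \<longleftrightarrow> a\<noteq>1/2 \<and> (1-2*a)^2 \<le> Kst \<and> x1<0 \<and> x6<0 \<and>
     (x0>0 \<longleftrightarrow> (1-a)/(1-2*a)>0) \<and> (x2>0 \<longleftrightarrow> -a/(1-2*a)>0)"
definition cD :: "real \<Rightarrow> real \<Rightarrow> real \<Rightarrow> real \<Rightarrow> real \<Rightarrow> bool" where
  "cD a x0 x1 x2 x6 \<longleftrightarrow> a\<noteq>1/2 \<and> 0<a \<and> a<1 \<and> x1>0 \<and> x6>0 \<and>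
     (x0>0 \<longleftrightarrow> \<not> (1-a)/(1-2*a)>0) \<and> (x2>0 \<longleftrightarrow> \<not> -a/(1-2*a)>0)"
definition cE :: "real \<Rightarrow> real \<Rightarrow> real \<Rightarrow> real \<Rightarrow> real \<Rightarrow> bool" where
  "cE a x0 x1 x2 x6 \<longleftrightarrow> a\<noteq>1/2 \<and> x1>0 \<and> x6>0 \<and>
     (x0>0 \<longleftrightarrow> (1-a)/(1-2*a)>0) \<and> (x2>0 \<longleftrightarrow> -a/(1-2*a)>0)"
definition cF :: "real \<Rightarrow> real \<Rightarrow> real \<Rightarrow> real \<Rightarrow> real \<Rightarrow> bool" where
  "cF a x0 x1 x2 x6 \<longleftrightarrow> a=1/2 \<and> x1>0 \<and> x6>0 \<and> (x0>0 \<longleftrightarrow> \<not> x2>0)"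

lemma pos_mult_iff: "(w::real) > 0 \<Longrightarrow> (r * w > 0 \<longleftrightarrow> r > 0)"
  by (simp add: zero_less_mult_iff)
lemma neg_mult_iff: "(w::real) < 0 \<Longrightarrow> (r * w > 0 \<longleftrightarrow> r < 0)"
  by (simp add: zero_less_mult_iff)

lemma lt1_helper: "(0::real) < P \<Longrightarrow> k*P < 1*P \<Longrightarrow> k < 1"
  using mult_less_cancel_right_pos[of P k 1] by simp

lemma classify:
  assumes a0: "a \<noteq> 0" and a1: "a \<noteq> 1" and S: "SOL a x0 x1 x2 x3 x4 x5 x6 x7 x8"
  shows "x3 > 0 \<and> x4 > 0 \<and> (cA a x0 x1 x2 x6 \<or> cB a x0 x1 x2 x6 \<or> cC a x0 x1 x2 x6 \<or>
     cD a x0 x1 x2 x6 \<or> cE a x0 x1 x2 x6 \<or> cF a x0 x1 x2 x6)"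
proof -
  note D = S[unfolded SOL_def]
  have nz: "x0 \<noteq> 0" "x1 \<noteq> 0" "x2 \<noteq> 0" "x3 \<noteq> 0" "x5 \<noteq> 0" "x6 \<noteq> 0" using D by auto
  have e: "x0+x1+x2+x4+x6 = 4/5" "x0+x3+x5+x7 = 3/5" "x0-x1-x3-x8 = -2/5" "x1-x2-x5-x8 = -1/5"
     "x2+x3-x4-x7 = 0" "x4+x5-x6 = 1/5" "x6+x7+x8 = 2/5" using D by auto
  have l: "x4 = x3" "x8 = x0" "x7 = x2" "x1 = 2/5 - x3" "x5 = 3/5 - x3 - x0 - x2" "x6 = 2/5 - x2 - x0"
    using e apply - apply linarith+ done
  have R1: "x1*x5 = x3*x3" and R2: "x1*x2*x2 = a^2*x3*x3*x6" and R3: "x0*x1*x0 = (1-a)^2*x3*x3*x6"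
    using D l by auto
  define v where "v = x1"
  define u where "u = x3"
  define W where "W = x0 + x2"
  have uv: "u = 2/5 - v" using l unfolding u_def v_def by simp
  have v0: "v \<noteq> 0" using nz v_def by simp
  have vW: "v * W = v - 4/25"
    using R1 l(4) l(5) unfolding v_def u_def W_def by algebra
  have x6W: "x6 = 2/5 - W" using l W_def by simp
  have R2': "v*x2^2 = a^2*u^2*x6" using R2 unfolding v_def u_def by (simp add: power2_eq_square algebra_simps)
  have R3': "v*x0^2 = (1-a)^2*u^2*x6" using R3 unfolding v_def u_def by (simp add: power2_eq_square algebra_simps)
  have "v * ((1-a)*x2)^2 = v * (a*x0)^2"
  proof -
    have "v * ((1-a)*x2)^2 = (1-a)^2 * (v*x2^2)" by (simp add: power_mult_distrib)
    also have "\<dots> = (1-a)^2 * (a^2*u^2*x6)" using R2' by simp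
    also have "\<dots> = a^2 * ((1-a)^2*u^2*x6)" by simp
    also have "\<dots> = a^2 * (v*x0^2)" using R3' by simp
    also have "\<dots> = v * (a*x0)^2" by (simp add: power_mult_distrib)
    finally show ?thesis .
  qed
  then have "((1-a)*x2)^2 = (a*x0)^2" using v0 by simp
  then have sig: "(1-a)*x2 = a*x0 \<or> (1-a)*x2 = -(a*x0)" by (simp add: power2_eq_iff)
  have main: "u > 0 \<and> (cA a x0 x1 x2 x6 \<or> cB a x0 x1 x2 x6 \<or> cC a x0 x1 x2 x6 \<or>
     cD a x0 x1 x2 x6 \<or> cE a x0 x1 x2 x6 \<or> cF a x0 x1 x2 x6)"
  using sig
  proof
    assume h: "(1-a)*x2 = a*x0"
    have q: "x2 = a*W" using h unfolding W_def by algebra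
    have s: "x0 = (1-a)*W" using q unfolding W_def by algebra
    have "v*W^2 = u^2*(2/5-W)"
    proof -
      have "a^2 * (v*W^2) = a^2 * (u^2*(2/5-W))" using R2' q x6W by (simp add: power_mult_distrib algebra_simps)
      then show ?thesis using a0 by simp
    qed
    then have "(v*W)^2 = u^2*(2/5*v - v*W)" by algebra
    then have "(v-4/25)^2 - (2/5-v)^2*(4/25-3*v/5) = 0" using vW uv by algebra
    then have "3/5*v*(v-1/5)*(v+4/5) = 0" using cubic1 by simp
    then have "v = 1/5 \<or> v = -4/5" using v0 by auto
    then show ?thesis
    proof
      assume v: "v = 1/5"
      then have W: "W = 1/5" using vW v by algebra
      have "x0 = (1-a)/5" "x2 = a/5" using q s W by simp_all
      then have "cA a x0 x1 x2 x6" unfolding cA_def using v W x6W v_def by auto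
      moreover have "u > 0" using uv v by simp
      ultimately show ?thesis by blast
    next
      assume v: "v = -4/5"
      then have W: "W = 6/5" using vW v by algebra
      have "x0 = (1-a)*(6/5)" "x2 = a*(6/5)" using q s W by simp_all
      then have "cB a x0 x1 x2 x6" unfolding cB_def using v W x6W v_def by auto
      moreover have "u > 0" using uv v by simp
      ultimately show ?thesis by blast
    qed
  next
    assume h: "(1-a)*x2 = -(a*x0)"
    have q: "(1-2*a)*x2 = -(a*W)" using h unfolding W_def by algebra
    have s: "(1-2*a)*x0 = (1-a)*W" using q unfolding W_def by algebra
    show ?thesis
    proof (cases "a = 1/2")
      case True
      then have W: "W = 0" using q True by algebra
      then have v: "v = 4/25" using vW by algebra
      have "x0 = - x2" using W W_def by simp
      then have "cF a x0 x1 x2 x6" unfolding cF_def using True v x6W W v_def nz by auto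
      moreover have "u > 0" using uv v by simp
      ultimately show ?thesis by blast
    next
      case False
      then have d0: "1-2*a \<noteq> 0" by simp
      define r where "r = (1-a)/(1-2*a)"
      define t where "t = -a/(1-2*a)"
      have q': "x2 = t * W" using q d0 unfolding t_def by (simp add: field_simps)
      have s': "x0 = r * W" using s d0 unfolding r_def by (simp add: field_simps)
      have W0: "W \<noteq> 0" using s' nz by auto
      have "v*W^2 = (1-2*a)^2*u^2*(2/5-W)"
      proof -
        have "a^2 * (v*W^2) = a^2 * ((1-2*a)^2*u^2*(2/5-W))"
        proof -
          have tq: "t*(1-2*a) = -a" using d0 unfolding t_def by simp
          show ?thesis using R2' q' x6W tq by algebra
        qed
        then show ?thesis using a0 by simp
      qed
      then have "(v*W)^2 = (1-2*a)^2*u^2*(2/5*v - v*W)" by algebra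
      then have cub: "(v-4/25)^2 = (1-2*a)^2*(2/5-v)^2*(4/25-3*v/5)" using vW uv by algebra
      have v425: "v \<noteq> 4/25"
      proof
        assume "v = 4/25"
        then have "v*W = 0" using vW by simp
        then show False using W0 v0 by simp
      qed
      have "(v-4/25)^2 > 0" using v425 by simp
      then have pp: "(1-2*a)^2*(2/5-v)^2*(4/25-3*v/5) > 0" using cub by simp
      have L0: "4/25-3*v/5 > 0"
      proof (rule ccontr)
        assume "\<not> 4/25-3*v/5 > 0"
        then have "4/25-3*v/5 \<le> 0" by simp
        moreover have "(1-2*a)^2*(2/5-v)^2 \<ge> 0" by simp
        ultimately have "(1-2*a)^2*(2/5-v)^2*(4/25-3*v/5) \<le> 0" by (metis mult_nonneg_nonpos)
        then show False using pp by simp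
      qed
      then have up: "u > 0" using uv by simp
      have up2: "(2/5-v)^2*(4/25-3*v/5) > 0" using L0 up uv by simp
      consider (neg) "v < 0" | (sm) "0 < v" "v < 4/25" | (md) "4/25 < v" using v0 v425 by linarith
      then show ?thesis
      proof cases
        case neg
        have "W - 1 = (-4/25) / v" using vW v0 by (simp add: field_simps)
        also have "\<dots> > 0" using neg by (simp add: divide_neg_neg)
        finally have W1: "W > 1" by simp
        have "(1-2*a)^2*((2/5-v)^2*(4/25-3*v/5)) \<le> Kst*((2/5-v)^2*(4/25-3*v/5))"
          using cub Kst_bound[OF neg] by (simp add: mult.assoc)
        then have k: "(1-2*a)^2 \<le> Kst" using up2 by (simp add: mult_le_cancel_right_pos)
        have "x0 > 0 \<longleftrightarrow> r > 0" "x2 > 0 \<longleftrightarrow> t > 0" using q' s' W1 by (simp_all add: pos_mult_iff)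
        then have "cC a x0 x1 x2 x6" unfolding cC_def r_def[symmetric] t_def[symmetric]
          using False k neg W1 x6W v_def by simp
        then show ?thesis using up by blast
      next
        case sm
        have "W - 1 = (-4/25) / v" using vW v0 by (simp add: field_simps)
        have W1: "W < 0"
        proof -
          have "W = (v - 4/25) / v" using vW v0 by (simp add: field_simps)
          also have "\<dots> < 0" using sm by (simp add: divide_neg_pos)
          finally show ?thesis .
        qed
        have "(1-2*a)^2 < 1"
        proof -
          have "(v-4/25)^2 - (2/5-v)^2*(4/25-3*v/5) < 0" unfolding cubic1 using sm
            by (simp add: mult_pos_neg mult_neg_pos)
          then have "(1-2*a)^2*((2/5-v)^2*(4/25-3*v/5)) < 1*((2/5-v)^2*(4/25-3*v/5))"
            using cub by (simp add: mult.assoc)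
          then show ?thesis using lt1_helper[OF up2] by blast
        qed
        then have "a*(a-1) < 0" by (simp add: power2_eq_square algebra_simps)
        then have a01: "0 < a \<and> a < 1" by (auto simp: mult_less_0_iff)
        have "x0 > 0 \<longleftrightarrow> \<not> r > 0" "x2 > 0 \<longleftrightarrow> \<not> t > 0" using q' s' W1 nz by (auto simp: neg_mult_iff)
        then have "cD a x0 x1 x2 x6" unfolding cD_def r_def[symmetric] t_def[symmetric]
          using False a01 sm W1 x6W v_def by simp
        then show ?thesis using up by blast
      next
        case md
        have W1: "W > 0"
        proof -
          have "W = (v - 4/25) / v" using vW v0 by (simp add: field_simps)
          also have "\<dots> > 0" using md by simp
          finally show ?thesis .
        qed
        have "W < 2/5"
        proof -
          have "v*W < v*(2/5)" using vW L0 by simp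
          then show ?thesis using md by simp
        qed
        moreover have "x0 > 0 \<longleftrightarrow> r > 0" "x2 > 0 \<longleftrightarrow> t > 0" using q' s' W1 by (simp_all add: pos_mult_iff)
        ultimately have "cE a x0 x1 x2 x6" unfolding cE_def r_def[symmetric] t_def[symmetric]
          using False md W1 x6W v_def by simp
        then show ?thesis using up by blast
      qed
    qed
  qed
  then show ?thesis using main l unfolding u_def by simp
qed

lemma exA:
  assumes "a \<noteq> 0" "a \<noteq> 1"
  shows "\<exists>x0 x1 x2 x3 x4 x5 x6 x7 x8. SOL a x0 x1 x2 x3 x4 x5 x6 x7 x8 \<and> cA a x0 x1 x2 x6"
proof -
  have "SOL a ((1-a)/5) (1/5) (a/5) (1/5) (1/5) (1/5) (1/5) (a/5) ((1-a)/5)"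
    using assms unfolding SOL_def by (simp add: power2_eq_square field_simps)
  moreover have "cA a ((1-a)/5) (1/5) (a/5) (1/5)" unfolding cA_def by auto
  ultimately show ?thesis by blast
qed

lemma exB:
  assumes "a \<noteq> 0" "a \<noteq> 1"
  shows "\<exists>x0 x1 x2 x3 x4 x5 x6 x7 x8. SOL a x0 x1 x2 x3 x4 x5 x6 x7 x8 \<and> cB a x0 x1 x2 x6"
proof -
  have "SOL a (6*(1-a)/5) (-4/5) (6*a/5) (6/5) (6/5) (-9/5) (-4/5) (6*a/5) (6*(1-a)/5)"
    using assms unfolding SOL_def by (simp add: power2_eq_square field_simps)
  moreover have "cB a (6*(1-a)/5) (-4/5) (6*a/5) (-4/5)" unfolding cB_def by auto
  ultimately show ?thesis by blast
qed

lemma exF: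
  assumes "a = 1/2" "q^2 = 9/250"
  shows "SOL a (-q) (4/25) q (6/25) (6/25) (9/25) (2/5) q (-q)"
proof -
  have "q \<noteq> 0" using assms by auto
  then show ?thesis using assms(2) unfolding SOL_def assms(1) by (simp add: power2_eq_square field_simps)
qed

lemma exF1:
  assumes "a = 1/2"
  shows "\<exists>x0 x1 x2 x3 x4 x5 x6 x7 x8. SOL a x0 x1 x2 x3 x4 x5 x6 x7 x8 \<and> x0 > 0 \<and> x1 > 0 \<and> \<not> x2 > 0 \<and> x6 > 0"
proof -
  define q where "q = - sqrt (9/250::real)"
  have "q^2 = 9/250" unfolding q_def by simp
  moreover have "q < 0" unfolding q_def by simp
  ultimately show ?thesis using exF[OF assms] by (metis neg_0_less_iff_less not_less_iff_gr_or_eq zero_less_divide_iff zero_less_numeral)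
qed

lemma exF2:
  assumes "a = 1/2"
  shows "\<exists>x0 x1 x2 x3 x4 x5 x6 x7 x8. SOL a x0 x1 x2 x3 x4 x5 x6 x7 x8 \<and> \<not> x0 > 0 \<and> x1 > 0 \<and> x2 > 0 \<and> x6 > 0"
proof -
  define q where "q = sqrt (9/250::real)"
  have "q^2 = 9/250" unfolding q_def by simp
  moreover have "q > 0" unfolding q_def by simp
  ultimately show ?thesis using exF[OF assms] by (metis neg_less_0_iff_less not_less_iff_gr_or_eq zero_less_divide_iff zero_less_numeral)
qed

lemma l88: fixes v P W :: real shows "v*P = (2/5-v)^2 \<Longrightarrow> v*W = v - 4/25 \<Longrightarrow> v*((2/5-v) + P + W) = v*(3/5)"
  by algebra
lemma l94: fixes v W a :: real shows "(v-4/25)^2 = (1-2*a)^2*(2/5-v)^2*(4/25-3*v/5) \<Longrightarrow> v*W = v - 4/25 \<Longrightarrow>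
   (v*W)^2 = (1-2*a)^2*(2/5-v)^2*(2/5*v - v*W)"
  by algebra
lemma l95: fixes v W k u :: real shows "(v*W)^2 = k*u^2*(2/5*v - v*W) \<Longrightarrow> v * (v*W^2) = v * (k*u^2*(2/5-W))"
  by algebra
lemma l97: fixes v W t a u :: real shows "v*W^2 = (1-2*a)^2*u^2*(2/5-W) \<Longrightarrow> t*(1-2*a) = -a \<Longrightarrow> v*(t*W)*(t*W) = a^2*u*u*(2/5-W)"
  by algebra
lemma l104: fixes v W r a u :: real shows "v*W^2 = (1-2*a)^2*u^2*(2/5-W) \<Longrightarrow> r*(1-2*a) = 1-a \<Longrightarrow> r*W*v*(r*W) = (1-a)^2*u*u*(2/5-W)"
  by algebra

lemma gen_sigma_minus:
  assumes a0: "a \<noteq> 0" and a1: "a \<noteq> 1" and a2: "a \<noteq> 1/2"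
    and v0: "v \<noteq> 0" and v1: "v \<noteq> 4/25" and v2: "v < 4/15"
    and cub: "(v-4/25)^2 = (1-2*a)^2*(2/5-v)^2*(4/25-3*v/5)"
  shows "SOL a ((1-a)/(1-2*a) * ((v-4/25)/v)) v (-a/(1-2*a) * ((v-4/25)/v)) (2/5-v) (2/5-v)
           ((2/5-v)^2/v) (2/5 - (v-4/25)/v) (-a/(1-2*a) * ((v-4/25)/v)) ((1-a)/(1-2*a) * ((v-4/25)/v))"
proof -
  define W where "W = (v-4/25)/v"
  define u where "u = 2/5 - v"
  define r where "r = (1-a)/(1-2*a)"
  define t where "t = -a/(1-2*a)"
  define P where "P = u^2/v"
  have d0: "1-2*a \<noteq> 0" using a2 by simp
  have vW: "v*W = v - 4/25" unfolding W_def using v0 by simp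
  have W0: "W \<noteq> 0" unfolding W_def using v0 v1 by simp
  have u0: "u \<noteq> 0" unfolding u_def using v2 by simp
  have P0: "P \<noteq> 0" unfolding P_def using u0 v0 by simp
  have vP: "v*P = u^2" unfolding P_def using v0 by simp
  have x6: "2/5 - W \<noteq> 0"
  proof
    assume "2/5 - W = 0"
    then have "W = 2/5" by simp
    then have "v*W = v*(2/5)" by simp
    then have "v*(2/5) = v - 4/25" using vW by simp
    then have "v = 4/15" by linarith
    then show False using v2 by simp
  qed
  have r0: "r \<noteq> 0" unfolding r_def using a1 d0 by simp
  have t0: "t \<noteq> 0" unfolding t_def using a0 d0 by simp
  have tq: "t*(1-2*a) = -a" unfolding t_def using d0 by simp
  have rq: "r*(1-2*a) = 1-a" unfolding r_def using d0 by simp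
  have rt: "r + t = 1"
  proof -
    have "(r + t)*(1-2*a) = 1*(1-2*a)" using tq rq by (simp add: distrib_right)
    then show ?thesis using d0 by simp
  qed
  have lin: "r*W + t*W = W" using rt by (metis distrib_right mult_1)
  have e2: "u + P + r*W + t*W = 3/5"
  proof -
    have "v*(u + P + W) = v*(3/5)" using l88[of v P W] vP vW unfolding u_def by simp
    then have "u + P + W = 3/5" using v0 by simp
    then show ?thesis using lin by simp
  qed
  have h: "v*W^2 = (1-2*a)^2*u^2*(2/5-W)"
  proof -
    have "(v*W)^2 = (1-2*a)^2*u^2*(2/5*v - v*W)" using l94[OF cub vW] unfolding u_def .
    then have "v * (v*W^2) = v * ((1-2*a)^2*u^2*(2/5-W))" by (rule l95)
    then show ?thesis using v0 by simp
  qed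
  have R2: "v*(t*W)*(t*W) = a^2*u*u*(2/5-W)" using l97[OF h tq] .
  have R3: "r*W*v*(r*W) = (1-a)^2*u*u*(2/5-W)" using l104[OF h rq] .
  have E: "r*W + v + t*W + u + (2/5 - W) = 4/5" "r*W + u + P + t*W = 3/5"
    "r*W - v - u - r*W = -2/5" "v - t*W - P - r*W = -1/5" "t*W + u - u - t*W = 0"
    "u + P - (2/5 - W) = 1/5" "2/5 - W + t*W + r*W = 2/5"
    using lin e2 unfolding u_def apply - apply linarith+ done
  have R1: "v*P = u*u" using vP by (simp add: power2_eq_square)
  have nzs: "r*W \<noteq> 0" "t*W \<noteq> 0" using r0 t0 W0 by simp_all
  have "SOL a (r*W) v (t*W) u u P (2/5 - W) (t*W) (r*W)"
    unfolding SOL_def by (intro conjI) (fact nzs E R1 R2 R3 v0 u0 x6 P0)+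
  then show ?thesis unfolding W_def u_def r_def t_def P_def .
qed

definition G :: "real \<Rightarrow> real \<Rightarrow> real" where
  "G k v = (v-4/25)^2 - k*(2/5-v)^2*(4/25-3*v/5)"

lemma G_cont: "continuous_on S (G k)"
  unfolding G_def by (intro continuous_intros) auto

lemma G0: "G k 0 = 16/625*(1-k)" unfolding G_def by (simp add: power2_eq_square)
lemma G425: "G k (4/25) = -k*(288/78125)" unfolding G_def by (simp add: power2_eq_square)
lemma G415: "G k (4/15) = 64/5625" unfolding G_def by (simp add: power2_eq_square)

lemma root_E:
  assumes "k > 0" shows "\<exists>v. 4/25 < v \<and> v < 4/15 \<and> G k v = 0"
proof -
  have "G k (4/25) \<le> 0" "0 \<le> G k (4/15)" using assms by (simp_all add: G425 G415)
  then obtain v where v: "4/25 \<le> v" "v \<le> 4/15" "G k v = 0"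
    using IVT'[of "G k" "4/25" 0 "4/15"] G_cont by auto
  moreover have "G k (4/25) \<noteq> 0" "G k (4/15) \<noteq> 0" using assms by (simp_all add: G425 G415)
  then have "v \<noteq> 4/25" "v \<noteq> 4/15" using v(3) by metis+
  ultimately show ?thesis by (intro exI[of _ v]) auto
qed

lemma root_D:
  assumes "k > 0" "k < 1" shows "\<exists>v. 0 < v \<and> v < 4/25 \<and> G k v = 0"
proof -
  have "G k (4/25) \<le> 0" "0 \<le> G k 0" using assms by (simp_all add: G425 G0)
  then obtain v where v: "0 \<le> v" "v \<le> 4/25" "G k v = 0"
    using IVT2'[of "G k" "4/25" 0 0] G_cont by auto
  moreover have "G k (4/25) \<noteq> 0" "G k 0 \<noteq> 0" using assms by (simp_all add: G425 G0)
  then have "v \<noteq> 4/25" "v \<noteq> 0" using v(3) by metis+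
  ultimately show ?thesis by (intro exI[of _ v]) auto
qed

lemma root_C1:
  assumes k0: "k > 0" and k1: "k < 1" shows "\<exists>v. v < 0 \<and> G k v = 0"
proof -
  define T where "T = 2/k"
  have T0: "T > 0" unfolding T_def using k0 by simp
  have kT: "k*T = 2" unfolding T_def using k0 by simp
  have "G k (-T) < 0"
  proof -
    have a: "(-T-4/25)^2 < (2/5+T)^2" using T0 by (simp add: power2_eq_square algebra_simps)
    have "k*(4/25+3*T/5) = 4*k/25 + 6/5" using kT by (simp add: algebra_simps)
    then have b: "k*(4/25+3*T/5) > 1" using k0 by simp
    have "(2/5+T)^2 * 1 < (2/5+T)^2 * (k*(4/25+3*T/5))"
      using b T0 by (intro mult_strict_left_mono) auto
    then have "(-T-4/25)^2 < k*(2/5-(-T))^2*(4/25-3*(-T)/5)" using a by (simp add: algebra_simps)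
    then show ?thesis unfolding G_def by simp
  qed
  moreover have "0 \<le> G k 0" using k1 by (simp add: G0)
  ultimately obtain v where v: "-T \<le> v" "v \<le> 0" "G k v = 0"
    using IVT'[of "G k" "-T" 0 0] G_cont T0 by auto
  moreover have "G k 0 \<noteq> 0" using k1 by (simp add: G0)
  then have "v \<noteq> 0" using v(3) by metis
  ultimately show ?thesis by (intro exI[of _ v]) auto
qed

lemma root_C2:
  assumes k1: "k > 1" and kK: "k \<le> Kst" shows "\<exists>v. v < 0 \<and> G k v = 0"
proof -
  define vm where "vm = (1 - sqrt 41)/25"
  have vm0: "vm < 0" unfolding vm_def using sqrt41_gt by simp
  have Q: "(2/5-vm)^2*(4/25-3*vm/5) > 0" using vm0 by simp
  have e: "(vm-4/25)^2 = Kst*(2/5-vm)^2*(4/25-3*vm/5)" using Kst_vm unfolding vm_def .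
  have "G k vm = (Kst - k) * ((2/5-vm)^2*(4/25-3*vm/5))"
    unfolding G_def using e by algebra
  also have "\<dots> \<ge> 0" using Q kK by simp
  finally have "G k vm \<ge> 0" .
  moreover have "G k 0 \<le> 0" using k1 by (simp add: G0)
  ultimately obtain v where v: "vm \<le> v" "v \<le> 0" "G k v = 0"
    using IVT2'[of "G k" 0 0 vm] G_cont vm0 by auto
  moreover have "G k 0 \<noteq> 0" using k1 by (simp add: G0)
  then have "v \<noteq> 0" using v(3) by metis
  ultimately show ?thesis by (intro exI[of _ v]) auto
qed


lemma G_cub: "G ((1-2*a)^2) v = 0 \<Longrightarrow> (v-4/25)^2 = (1-2*a)^2*(2/5-v)^2*(4/25-3*v/5)"
  unfolding G_def by simp

lemma exE:
  assumes a0: "a \<noteq> 0" and a1: "a \<noteq> 1" and a2: "a \<noteq> 1/2"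
  shows "\<exists>x0 x1 x2 x3 x4 x5 x6 x7 x8. SOL a x0 x1 x2 x3 x4 x5 x6 x7 x8 \<and> cE a x0 x1 x2 x6"
proof -
  have "(1-2*a)^2 > 0" using a2 by simp
  then obtain v where v: "4/25 < v" "v < 4/15" "G ((1-2*a)^2) v = 0" using root_E by blast
  define W where "W = (v-4/25)/v"
  have W0: "W > 0" unfolding W_def using v by simp
  have W1: "W < 2/5"
  proof -
    have "v*W = v - 4/25" unfolding W_def using v by simp
    then have "v*W < v*(2/5)" using v by simp
    then show ?thesis using v by simp
  qed
  have S: "SOL a ((1-a)/(1-2*a) * W) v (-a/(1-2*a) * W) (2/5-v) (2/5-v)
           ((2/5-v)^2/v) (2/5 - W) (-a/(1-2*a) * W) ((1-a)/(1-2*a) * W)"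
    unfolding W_def using gen_sigma_minus[OF a0 a1 a2 _ _ _ G_cub[OF v(3)]] v by simp
  define r where "r = (1-a)/(1-2*a)"
  define t where "t = -a/(1-2*a)"
  have S': "SOL a (r * W) v (t * W) (2/5-v) (2/5-v) ((2/5-v)^2/v) (2/5 - W) (t * W) (r * W)"
    using S unfolding r_def t_def .
  have "cE a (r * W) v (t * W) (2/5 - W)"
    unfolding cE_def r_def[symmetric] t_def[symmetric] using a2 v W0 W1 by (simp add: pos_mult_iff[OF W0])
  then show ?thesis using S' by blast
qed

lemma exD:
  assumes a0: "0 < a" and a1: "a < 1" and a2: "a \<noteq> 1/2"
  shows "\<exists>x0 x1 x2 x3 x4 x5 x6 x7 x8. SOL a x0 x1 x2 x3 x4 x5 x6 x7 x8 \<and> cD a x0 x1 x2 x6"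
proof -
  have k0: "(1-2*a)^2 > 0" using a2 by simp
  have "(1-2*a)^2 < 1"
  proof -
    have "(1-2*a)^2 = 1 - 4*(a*(1-a))" by (simp add: power2_eq_square algebra_simps)
    moreover have "a*(1-a) > 0" using a0 a1 by simp
    ultimately show ?thesis by simp
  qed
  then obtain v where v: "0 < v" "v < 4/25" "G ((1-2*a)^2) v = 0" using root_D k0 by blast
  define W where "W = (v-4/25)/v"
  have W0: "W < 0" unfolding W_def using v by (simp add: divide_neg_pos)
  have W1: "W < 2/5" using W0 by simp
  have S: "SOL a ((1-a)/(1-2*a) * W) v (-a/(1-2*a) * W) (2/5-v) (2/5-v)
           ((2/5-v)^2/v) (2/5 - W) (-a/(1-2*a) * W) ((1-a)/(1-2*a) * W)"
    unfolding W_def using gen_sigma_minus[OF _ _ a2 _ _ _ G_cub[OF v(3)]] v a0 a1 by simp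
  have r0: "(1-a)/(1-2*a) \<noteq> 0" "-a/(1-2*a) \<noteq> 0" using a0 a1 a2 by auto
  define r where "r = (1-a)/(1-2*a)"
  define t where "t = -a/(1-2*a)"
  have S': "SOL a (r * W) v (t * W) (2/5-v) (2/5-v) ((2/5-v)^2/v) (2/5 - W) (t * W) (r * W)"
    using S unfolding r_def t_def .
  have "cD a (r * W) v (t * W) (2/5 - W)"
    unfolding cD_def r_def[symmetric] t_def[symmetric] using a0 a1 a2 v W0 W1 r0 unfolding r_def[symmetric] t_def[symmetric] by (auto simp: neg_mult_iff[OF W0])
  then show ?thesis using S' by blast
qed

lemma exC:
  assumes a0: "a \<noteq> 0" and a1: "a \<noteq> 1" and a2: "a \<noteq> 1/2" and aK: "(1-2*a)^2 \<le> Kst"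
  shows "\<exists>x0 x1 x2 x3 x4 x5 x6 x7 x8. SOL a x0 x1 x2 x3 x4 x5 x6 x7 x8 \<and> cC a x0 x1 x2 x6"
proof -
  have k0: "(1-2*a)^2 > 0" using a2 by simp
  have "(1-2*a)^2 \<noteq> 1"
  proof
    assume "(1-2*a)^2 = 1"
    then have "a*(a-1) = 0" by (simp add: power2_eq_square algebra_simps)
    then show False using a0 a1 by simp
  qed
  then have "\<exists>v. v < 0 \<and> G ((1-2*a)^2) v = 0"
    using root_C1[OF k0] root_C2[OF _ aK] by (cases "(1-2*a)^2 < 1") auto
  then obtain v where v: "v < 0" "G ((1-2*a)^2) v = 0" by blast
  define W where "W = (v-4/25)/v"
  have W0: "W > 1"
  proof -
    have "W - 1 = (-4/25)/v" unfolding W_def using v by (simp add: field_simps)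
    also have "\<dots> > 0" using v by (simp add: divide_neg_neg)
    finally show ?thesis by simp
  qed
  have Wp: "W > 0" using W0 by simp
  have S: "SOL a ((1-a)/(1-2*a) * W) v (-a/(1-2*a) * W) (2/5-v) (2/5-v)
           ((2/5-v)^2/v) (2/5 - W) (-a/(1-2*a) * W) ((1-a)/(1-2*a) * W)"
    unfolding W_def using gen_sigma_minus[OF a0 a1 a2 _ _ _ G_cub[OF v(2)]] v by simp
  define r where "r = (1-a)/(1-2*a)"
  define t where "t = -a/(1-2*a)"
  have S': "SOL a (r * W) v (t * W) (2/5-v) (2/5-v) ((2/5-v)^2/v) (2/5 - W) (t * W) (r * W)"
    using S unfolding r_def t_def .
  have "cC a (r * W) v (t * W) (2/5 - W)"
    unfolding cC_def r_def[symmetric] t_def[symmetric] using a2 aK v W0 Wp by (simp add: pos_mult_iff[OF Wp])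
  then show ?thesis using S' by blast
qed

definition EQS :: "real \<Rightarrow> real \<Rightarrow> real \<Rightarrow> real \<Rightarrow> real \<Rightarrow> real \<Rightarrow> real \<Rightarrow> real \<Rightarrow> real \<Rightarrow> bool" where
  "EQS x0 x1 x2 x3 x4 x5 x6 x7 x8 \<longleftrightarrow>
     x0+x1+x2+x4+x6 = 4/5 \<and> x0+x3+x5+x7 = 3/5 \<and> x0-x1-x3-x8 = -2/5 \<and> x1-x2-x5-x8 = -1/5 \<and>
     x2+x3-x4-x7 = 0 \<and> x4+x5-x6 = 1/5 \<and> x6+x7+x8 = 2/5"

lemma hh: "(X::real)/2 = - 1/2 + 1/2*c \<longleftrightarrow> X = c - 1" by auto

lemma EQS_diag:
  fixes A0 A1 A2 A3 A4 A5 A6 A7 A8 :: real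
  shows "EQS A0 A1 A2 A3 A4 A5 A6 A7 A8 \<longleftrightarrow>
    (0 - (A0) - (A1) - (A2) - (A4) - (A6)) = 1/5 - 1 \<and>
    (0 - (A0) - (A3) - (A5) - (A7)) = 2/5 - 1 \<and>
    (0 + (A0) - (A1) - (A3) - (A8)) = 3/5 - 1 \<and>
    (0 + (A1) - (A2) - (A5) - (A8)) = 4/5 - 1 \<and>
    (0 + (A2) + (A3) - (A4) - (A7)) = 1 - 1 \<and>
    (0 + (A4) + (A5) - (A6)) = 6/5 - 1 \<and>
    (0 + (A6) + (A7) + (A8)) = 7/5 - 1"
  unfolding EQS_def by (intro iffI; elim conjE; intro conjI; linarith)

lemma ric_cond_iff:
  assumes a0: "a \<noteq> 0" and a1: "a \<noteq> 1"
  shows "ric_condition 7 (ga_bracket a) g \<longleftrightarrow> (\<forall>i\<in>{1..7}. g i \<noteq> 0) \<and>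
     EQS ((1-a)^2*g 3/(g 1*g 2)) (g 4/(g 1*g 3)) (a^2*g 5/(g 1*g 4)) (g 5/(g 2*g 3)) (g 6/(g 1*g 5))
         (g 6/(g 2*g 4)) (g 7/(g 1*g 6)) (g 7/(g 2*g 5)) (g 7/(g 3*g 4))"
proof (cases "\<forall>i\<in>{1..7}. g i \<noteq> 0")
  case False
  then show ?thesis unfolding ric_condition_def by blast
next
  case True
  then have nz: "g 1 \<noteq> 0" "g 2 \<noteq> 0" "g 3 \<noteq> 0" "g 4 \<noteq> 0" "g 5 \<noteq> 0" "g 6 \<noteq> 0" "g 7 \<noteq> 0" by auto
  have nk: "nik_diag 7 (ga_bracket a) 1 = 1/5" "nik_diag 7 (ga_bracket a) 2 = 2/5"
     "nik_diag 7 (ga_bracket a) 3 = 3/5" "nik_diag 7 (ga_bracket a) 4 = 4/5"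
     "nik_diag 7 (ga_bracket a) 5 = 1" "nik_diag 7 (ga_bracket a) 6 = 6/5"
     "nik_diag 7 (ga_bracket a) 7 = 7/5"
    using nik_ga[OF a0 a1, of 1] nik_ga[OF a0 a1, of 2] nik_ga[OF a0 a1, of 3] nik_ga[OF a0 a1, of 4]
      nik_ga[OF a0 a1, of 5] nik_ga[OF a0 a1, of 6] nik_ga[OF a0 a1, of 7] by simp_all
  note R = ric_1_1[OF nz] ric_1_2[OF nz] ric_1_3[OF nz] ric_1_4[OF nz] ric_1_5[OF nz] ric_1_6[OF nz] ric_1_7[OF nz]
    ric_2_1[OF nz] ric_2_2[OF nz] ric_2_3[OF nz] ric_2_4[OF nz] ric_2_5[OF nz] ric_2_6[OF nz] ric_2_7[OF nz]
    ric_3_1[OF nz] ric_3_2[OF nz] ric_3_3[OF nz] ric_3_4[OF nz] ric_3_5[OF nz] ric_3_6[OF nz] ric_3_7[OF nz]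
    ric_4_1[OF nz] ric_4_2[OF nz] ric_4_3[OF nz] ric_4_4[OF nz] ric_4_5[OF nz] ric_4_6[OF nz] ric_4_7[OF nz]
    ric_5_1[OF nz] ric_5_2[OF nz] ric_5_3[OF nz] ric_5_4[OF nz] ric_5_5[OF nz] ric_5_6[OF nz] ric_5_7[OF nz]
    ric_6_1[OF nz] ric_6_2[OF nz] ric_6_3[OF nz] ric_6_4[OF nz] ric_6_5[OF nz] ric_6_6[OF nz] ric_6_7[OF nz]
    ric_7_1[OF nz] ric_7_2[OF nz] ric_7_3[OF nz] ric_7_4[OF nz] ric_7_5[OF nz] ric_7_6[OF nz] ric_7_7[OF nz]
  let ?E = "EQS ((1-a)^2*g 3/(g 1*g 2)) (g 4/(g 1*g 3)) (a^2*g 5/(g 1*g 4)) (g 5/(g 2*g 3)) (g 6/(g 1*g 5))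
         (g 6/(g 2*g 4)) (g 7/(g 1*g 6)) (g 7/(g 2*g 5)) (g 7/(g 3*g 4))"
  let ?P = "\<forall>j\<in>{1..7}. \<forall>k\<in>{1..7}.
        ricci_op 7 (ga_bracket a) g k j = (if k = j then - 1/2 + 1/2 * nik_diag 7 (ga_bracket a) k else 0)"
  have "?P \<longleftrightarrow> ?E"
    unfolding EQS_diag set17
    by (simp only: ball_simps R nk hh one_eq_numeral_iff numeral_eq_one_iff numeral_eq_iff
          num.inject num.distinct simp_thms if_True if_False)
  then show ?thesis unfolding ric_condition_def using True by blast
qed

definition ins :: "bool \<Rightarrow> nat \<Rightarrow> nat set \<Rightarrow> nat set" where
  "ins b i A = (if b then A else insert i A)"

lemma ins_simps[simp]: "ins True i A = A" "ins False i A = insert i A" unfolding ins_def by simp_all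

definition SIG :: "bool \<Rightarrow> bool \<Rightarrow> bool \<Rightarrow> bool \<Rightarrow> bool \<Rightarrow> bool \<Rightarrow> bool \<Rightarrow> nat set" where
  "SIG e1 b0 b1 b2 b3 b4 b6 = (let e2 = (b3 = (b2 = b1)); e3 = (b0 = (e1 = e2)); e4 = (b1 = (e1 = e3));
      e5 = (b2 = (e1 = e4)); e6 = (b4 = (e1 = e5)); e7 = (b6 = (e1 = e6)) in
     ins e1 1 (ins e2 2 (ins e3 3 (ins e4 4 (ins e5 5 (ins e6 6 (ins e7 7 {})))))))"

lemma SIG_abs:
  "SIG P1 (P3 = (P1 = P2)) (P4 = (P1 = P3)) (P5 = (P1 = P4)) (P5 = (P2 = P3)) (P6 = (P1 = P5)) (P7 = (P1 = P6)) =
     ins P1 1 (ins P2 2 (ins P3 3 (ins P4 4 (ins P5 5 (ins P6 6 (ins P7 7 {}))))))"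
  by (cases P1; cases P2; cases P3; cases P4; cases P5; cases P6; cases P7) (simp_all add: SIG_def)

lemma signature_eq:
  "signature 7 g = ins (\<not> g 1 < 0) 1 (ins (\<not> g 2 < 0) 2 (ins (\<not> g 3 < 0) 3 (ins (\<not> g 4 < 0) 4
     (ins (\<not> g 5 < 0) 5 (ins (\<not> g 6 < 0) 6 (ins (\<not> g 7 < 0) 7 {}))))))"
  unfolding signature_def set17 ins_def by auto

lemma sign_quot:
  fixes c x y z :: real
  assumes "c > 0" "x \<noteq> 0" "y \<noteq> 0" "z \<noteq> 0"
  shows "(c*x/(y*z) > 0) \<longleftrightarrow> ((x>0) = ((y>0) = (z>0)))"
  using assms by (cases "x > 0"; cases "y > 0"; cases "z > 0")
    (auto simp: zero_less_divide_iff zero_less_mult_iff mult_less_0_iff)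

lemma sign_quot1:
  fixes x y z :: real
  assumes "x \<noteq> 0" "y \<noteq> 0" "z \<noteq> 0"
  shows "(x/(y*z) > 0) \<longleftrightarrow> ((x>0) = ((y>0) = (z>0)))"
  using sign_quot[of 1 x y z] assms by simp

lemma sig_signs:
  assumes nz: "g 1 \<noteq> 0" "g 2 \<noteq> 0" "g 3 \<noteq> 0" "g 4 \<noteq> 0" "g 5 \<noteq> 0" "g 6 \<noteq> 0" "g 7 \<noteq> (0::real)"
    and a0: "a \<noteq> 0" and a1: "a \<noteq> 1"
  shows "signature 7 g = SIG (g 1 > 0) ((1-a)^2*g 3/(g 1*g 2) > 0) (g 4/(g 1*g 3) > 0) (a^2*g 5/(g 1*g 4) > 0)
     (g 5/(g 2*g 3) > 0) (g 6/(g 1*g 5) > 0) (g 7/(g 1*g 6) > 0)"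
proof -
  have b: "((1-a)^2*g 3/(g 1*g 2) > 0) = ((g 3 > 0) = ((g 1 > 0) = (g 2 > 0)))"
     "(g 4/(g 1*g 3) > 0) = ((g 4 > 0) = ((g 1 > 0) = (g 3 > 0)))"
     "(a^2*g 5/(g 1*g 4) > 0) = ((g 5 > 0) = ((g 1 > 0) = (g 4 > 0)))"
     "(g 5/(g 2*g 3) > 0) = ((g 5 > 0) = ((g 2 > 0) = (g 3 > 0)))"
     "(g 6/(g 1*g 5) > 0) = ((g 6 > 0) = ((g 1 > 0) = (g 5 > 0)))"
     "(g 7/(g 1*g 6) > 0) = ((g 7 > 0) = ((g 1 > 0) = (g 6 > 0)))"
    by (rule sign_quot sign_quot1; use nz a0 a1 in simp)+
  have n: "(\<not> g i < 0) = (g i > 0)" if "g i \<noteq> 0" for i using that by auto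
  have "SIG (g 1 > 0) ((g 3 > 0) = ((g 1 > 0) = (g 2 > 0))) ((g 4 > 0) = ((g 1 > 0) = (g 3 > 0)))
    ((g 5 > 0) = ((g 1 > 0) = (g 4 > 0))) ((g 5 > 0) = ((g 2 > 0) = (g 3 > 0)))
    ((g 6 > 0) = ((g 1 > 0) = (g 5 > 0))) ((g 7 > 0) = ((g 1 > 0) = (g 6 > 0))) = signature 7 g"
    unfolding SIG_abs signature_eq n[OF nz(1)] n[OF nz(2)] n[OF nz(3)] n[OF nz(4)] n[OF nz(5)] n[OF nz(6)] n[OF nz(7)] ..
  then show ?thesis unfolding b by simp
qed

lemma SOL_EQS: "SOL a x0 x1 x2 x3 x4 x5 x6 x7 x8 \<longleftrightarrow>
     x0 \<noteq> 0 \<and> x1 \<noteq> 0 \<and> x2 \<noteq> 0 \<and> x3 \<noteq> 0 \<and> x4 \<noteq> 0 \<and> x5 \<noteq> 0 \<and> x6 \<noteq> 0 \<and> x7 \<noteq> 0 \<and> x8 \<noteq> 0 \<and>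
     EQS x0 x1 x2 x3 x4 x5 x6 x7 x8 \<and>
     x1*x5 = x3*x4 \<and> x1*x2*x7 = a^2*x3*x4*x6 \<and> x0*x1*x8 = (1-a)^2*x3*x4*x6"
  unfolding SOL_def EQS_def by auto

lemma char:
  assumes a0: "a \<noteq> 0" and a1: "a \<noteq> 1"
  shows "sig_set 7 (ga_bracket a) = {SIG e (x0>0) (x1>0) (x2>0) (x3>0) (x4>0) (x6>0) | e x0 x1 x2 x3 x4 x5 x6 x7 x8.
            SOL a x0 x1 x2 x3 x4 x5 x6 x7 x8}"
proof (rule set_eqI, rule iffI)
  fix s assume "s \<in> sig_set 7 (ga_bracket a)"
  then obtain g where s: "s = signature 7 g" and rc: "ric_condition 7 (ga_bracket a) g"
    unfolding sig_set_def by blast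
  from rc[unfolded ric_cond_iff[OF a0 a1]] have nz': "\<forall>i\<in>{1..7}. g i \<noteq> 0" and
    E: "EQS ((1-a)^2*g 3/(g 1*g 2)) (g 4/(g 1*g 3)) (a^2*g 5/(g 1*g 4)) (g 5/(g 2*g 3)) (g 6/(g 1*g 5))
         (g 6/(g 2*g 4)) (g 7/(g 1*g 6)) (g 7/(g 2*g 5)) (g 7/(g 3*g 4))" by auto
  have nz: "g 1 \<noteq> 0" "g 2 \<noteq> 0" "g 3 \<noteq> 0" "g 4 \<noteq> 0" "g 5 \<noteq> 0" "g 6 \<noteq> 0" "g 7 \<noteq> 0" using nz' by auto
  have R1: "g 4/(g 1*g 3) * (g 6/(g 2*g 4)) = g 5/(g 2*g 3) * (g 6/(g 1*g 5))"
    using nz by (simp add: field_simps)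
  have R2: "g 4/(g 1*g 3) * (a^2*g 5/(g 1*g 4)) * (g 7/(g 2*g 5)) = a^2 * (g 5/(g 2*g 3)) * (g 6/(g 1*g 5)) * (g 7/(g 1*g 6))"
    using nz by (simp add: field_simps)
  have R3: "(1-a)^2*g 3/(g 1*g 2) * (g 4/(g 1*g 3)) * (g 7/(g 3*g 4)) = (1-a)^2 * (g 5/(g 2*g 3)) * (g 6/(g 1*g 5)) * (g 7/(g 1*g 6))"
    using nz by (simp add: field_simps)
  have "SOL a ((1-a)^2*g 3/(g 1*g 2)) (g 4/(g 1*g 3)) (a^2*g 5/(g 1*g 4)) (g 5/(g 2*g 3)) (g 6/(g 1*g 5))
         (g 6/(g 2*g 4)) (g 7/(g 1*g 6)) (g 7/(g 2*g 5)) (g 7/(g 3*g 4))"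
    unfolding SOL_EQS using nz a0 a1 E R1 R2 R3 by simp
  moreover have "s = SIG (g 1 > 0) ((1-a)^2*g 3/(g 1*g 2) > 0) (g 4/(g 1*g 3) > 0) (a^2*g 5/(g 1*g 4) > 0)
     (g 5/(g 2*g 3) > 0) (g 6/(g 1*g 5) > 0) (g 7/(g 1*g 6) > 0)"
    using s sig_signs[OF nz a0 a1] by simp
  ultimately show "s \<in> {SIG e (x0>0) (x1>0) (x2>0) (x3>0) (x4>0) (x6>0) | e x0 x1 x2 x3 x4 x5 x6 x7 x8.
            SOL a x0 x1 x2 x3 x4 x5 x6 x7 x8}" by blast
next
  fix s assume "s \<in> {SIG e (x0>0) (x1>0) (x2>0) (x3>0) (x4>0) (x6>0) | e x0 x1 x2 x3 x4 x5 x6 x7 x8.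
            SOL a x0 x1 x2 x3 x4 x5 x6 x7 x8}"
  then obtain e x0 x1 x2 x3 x4 x5 x6 x7 x8 where s: "s = SIG e (x0>0) (x1>0) (x2>0) (x3>0) (x4>0) (x6>0)"
    and S: "SOL a x0 x1 x2 x3 x4 x5 x6 x7 x8" by blast
  note SS = S[unfolded SOL_EQS]
  have xnz: "x0 \<noteq> 0" "x1 \<noteq> 0" "x2 \<noteq> 0" "x3 \<noteq> 0" "x4 \<noteq> 0" "x5 \<noteq> 0" "x6 \<noteq> 0" "x7 \<noteq> 0" "x8 \<noteq> 0"
    using SS by auto
  have EQ: "EQS x0 x1 x2 x3 x4 x5 x6 x7 x8" using SS by auto
  have r1: "x1*x5 = x3*x4" and r2: "x1*x2*x7 = a^2*x3*x4*x6" and r3: "x0*x1*x8 = (1-a)^2*x3*x4*x6"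
    using SS by auto
  define g1 :: real where "g1 = (if e then 1 else -1)"
  define g2 where "g2 = x1*x2/(a^2*x3)"
  define g3 where "g3 = x0*g1*g2/(1-a)^2"
  define g4 where "g4 = x1*g1*g3"
  define g5 where "g5 = x3*g2*g3"
  define g6 where "g6 = x4*g1*g5"
  define g7 where "g7 = x6*g1*g6"
  define g :: "nat \<Rightarrow> real" where "g = (\<lambda>i. if i = 1 then g1 else if i = 2 then g2 else if i = 3 then g3
     else if i = 4 then g4 else if i = 5 then g5 else if i = 6 then g6 else g7)"
  have gg: "g 1 = g1" "g 2 = g2" "g 3 = g3" "g 4 = g4" "g 5 = g5" "g 6 = g6" "g 7 = g7" unfolding g_def by simp_all
  have g11: "g1 * g1 = 1" unfolding g1_def by simp
  have n1: "g1 \<noteq> 0" unfolding g1_def by simp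
  have n2: "g2 \<noteq> 0" unfolding g2_def using xnz a0 by simp
  have n3: "g3 \<noteq> 0" unfolding g3_def using xnz a1 n1 n2 by simp
  have n4: "g4 \<noteq> 0" unfolding g4_def using xnz n1 n3 by simp
  have n5: "g5 \<noteq> 0" unfolding g5_def using xnz n2 n3 by simp
  have n6: "g6 \<noteq> 0" unfolding g6_def using xnz n1 n5 by simp
  have n7: "g7 \<noteq> 0" unfolding g7_def using xnz n1 n6 by simp
  have a1': "(1-a) \<noteq> 0" using a1 by simp
  have X0: "(1-a)^2*g3/(g1*g2) = x0" unfolding g3_def using n1 n2 a1' by (simp add: field_simps)
  have X1: "g4/(g1*g3) = x1" unfolding g4_def using n1 n3 by (simp add: field_simps)
  have X2: "a^2*g5/(g1*g4) = x2"
  proof -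
    have "a^2*g5/(g1*g4) = a^2*x3*g2/(x1*(g1*g1))" unfolding g5_def g4_def using n1 n3 xnz by (simp add: field_simps)
    also have "\<dots> = x2" unfolding g11 g2_def using xnz a0 by (simp add: field_simps)
    finally show ?thesis .
  qed
  have X3: "g5/(g2*g3) = x3" unfolding g5_def using n2 n3 by (simp add: field_simps)
  have X4: "g6/(g1*g5) = x4" unfolding g6_def using n1 n5 by (simp add: field_simps)
  have X5: "g6/(g2*g4) = x5"
  proof -
    have "g6/(g2*g4) = x3*x4/x1" unfolding g6_def g5_def g4_def using n1 n2 n3 xnz by (simp add: field_simps)
    also have "\<dots> = x5" using r1 xnz by (simp add: field_simps)
    finally show ?thesis .
  qed
  have X6: "g7/(g1*g6) = x6" unfolding g7_def using n1 n6 by (simp add: field_simps)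
  have X7: "g7/(g2*g5) = x7"
  proof -
    have "g7/(g2*g5) = x6*x4*(g1*g1)/g2" unfolding g7_def g6_def using n2 n5 by (simp add: field_simps)
    also have "\<dots> = x6*x4*a^2*x3/(x1*x2)" unfolding g11 g2_def using xnz a0 by (simp add: field_simps)
    also have "\<dots> = x7" using r2 xnz by (simp add: field_simps)
    finally show ?thesis .
  qed
  have X8: "g7/(g3*g4) = x8"
  proof -
    have "g7/(g3*g4) = x6*x4*x3*g2/(x1*g1*g3)" unfolding g7_def g6_def g5_def g4_def using n1 n2 n3 xnz g11
      by (simp add: field_simps)
    also have "\<dots> = x6*x4*x3*(1-a)^2/(x1*x0*(g1*g1))" unfolding g3_def using n1 n2 xnz a1' by (simp add: field_simps)
    also have "\<dots> = x8" unfolding g11 using r3 xnz by (simp add: field_simps)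
    finally show ?thesis .
  qed
  have nzg: "\<forall>i\<in>{1..7}. g i \<noteq> 0" unfolding set17 using gg n1 n2 n3 n4 n5 n6 n7 by simp
  have rc: "ric_condition 7 (ga_bracket a) g"
    unfolding ric_cond_iff[OF a0 a1] gg X0 X1 X2 X3 X4 X5 X6 X7 X8 using nzg EQ by simp
  have "signature 7 g = SIG (g1 > 0) (x0>0) (x1>0) (x2>0) (x3>0) (x4>0) (x6>0)"
    using sig_signs[of g a, unfolded gg X0 X1 X2 X3 X4 X5 X6 X7 X8] n1 n2 n3 n4 n5 n6 n7 a0 a1 by simp
  moreover have "(g1 > 0) = e" unfolding g1_def by simp
  ultimately have "s = signature 7 g" using s by simp
  then show "s \<in> sig_set 7 (ga_bracket a)" unfolding sig_set_def using rc by blast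
qed

definition RR :: "real \<Rightarrow> bool" where "RR a = ((1-a)/(1-2*a) > 0)"
definition TT :: "real \<Rightarrow> bool" where "TT a = (-a/(1-2*a) > 0)"

definition OPTS :: "real \<Rightarrow> bool \<Rightarrow> nat set set" where
  "OPTS a e = {SIG e (a<1) True (a>0) True True True, SIG e (a<1) False (a>0) True True False} \<union>
     (if a \<noteq> 1/2 \<and> (1-2*a)^2 \<le> Kst then {SIG e (RR a) False (TT a) True True False} else {}) \<union>
     (if a \<noteq> 1/2 \<and> 0 < a \<and> a < 1 then {SIG e (\<not> RR a) True (\<not> TT a) True True True} else {}) \<union>
     (if a \<noteq> 1/2 then {SIG e (RR a) True (TT a) True True True} else {}) \<union>
     (if a = 1/2 then {SIG e False True True True True True, SIG e True True False True True True} else {})"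

lemma classify_SIG:
  assumes a0: "a \<noteq> 0" and a1: "a \<noteq> 1" and S: "SOL a x0 x1 x2 x3 x4 x5 x6 x7 x8"
  shows "SIG e (x0>0) (x1>0) (x2>0) (x3>0) (x4>0) (x6>0) \<in> OPTS a e"
proof -
  from classify[OF a0 a1 S] have p: "x3 > 0" "x4 > 0" and
    c: "cA a x0 x1 x2 x6 \<or> cB a x0 x1 x2 x6 \<or> cC a x0 x1 x2 x6 \<or> cD a x0 x1 x2 x6 \<or> cE a x0 x1 x2 x6 \<or> cF a x0 x1 x2 x6"
    by auto
  from c show ?thesis
  proof (elim disjE)
    assume h: "cA a x0 x1 x2 x6"
    then have "(x0>0) = (a<1)" "x1 > 0" "(x2>0) = (a>0)" "x6>0" unfolding cA_def by auto
    then show ?thesis unfolding OPTS_def using p by simp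
  next
    assume h: "cB a x0 x1 x2 x6"
    then have "(x0>0) = (a<1)" "\<not> x1 > 0" "(x2>0) = (a>0)" "\<not> x6>0" unfolding cB_def by auto
    then show ?thesis unfolding OPTS_def using p by simp
  next
    assume h: "cC a x0 x1 x2 x6"
    then have "(x0>0) = RR a" "\<not> x1 > 0" "(x2>0) = TT a" "\<not> x6>0" "a \<noteq> 1/2" "(1-2*a)^2 \<le> Kst"
      unfolding cC_def RR_def TT_def by auto
    then show ?thesis unfolding OPTS_def using p by simp
  next
    assume h: "cD a x0 x1 x2 x6"
    then have "(x0>0) = (\<not> RR a)" "x1 > 0" "(x2>0) = (\<not> TT a)" "x6>0" "a \<noteq> 1/2" "0 < a" "a < 1"
      unfolding cD_def RR_def TT_def by auto
    then show ?thesis unfolding OPTS_def using p by simp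
  next
    assume h: "cE a x0 x1 x2 x6"
    then have "(x0>0) = RR a" "x1 > 0" "(x2>0) = TT a" "x6>0" "a \<noteq> 1/2"
      unfolding cE_def RR_def TT_def by auto
    then show ?thesis unfolding OPTS_def using p by simp
  next
    assume h: "cF a x0 x1 x2 x6"
    then have "(x0>0) = (\<not> x2 > 0)" "x1 > 0" "x6>0" "a = 1/2"
      unfolding cF_def by auto
    then show ?thesis unfolding OPTS_def using p by (cases "x2 > 0") simp_all
  qed
qed

lemma sigset_sub:
  assumes a0: "a \<noteq> 0" and a1: "a \<noteq> 1"
  shows "sig_set 7 (ga_bracket a) \<subseteq> OPTS a True \<union> OPTS a False"
proof
  fix s assume "s \<in> sig_set 7 (ga_bracket a)"
  then obtain e x0 x1 x2 x3 x4 x5 x6 x7 x8 where s: "s = SIG e (x0>0) (x1>0) (x2>0) (x3>0) (x4>0) (x6>0)"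
    and S: "SOL a x0 x1 x2 x3 x4 x5 x6 x7 x8" unfolding char[OF a0 a1] by blast
  have "s \<in> OPTS a e" using classify_SIG[OF a0 a1 S] s by simp
  then show "s \<in> OPTS a True \<union> OPTS a False" by (cases e) auto
qed

lemma in_sigset:
  assumes a0: "a \<noteq> 0" and a1: "a \<noteq> 1" and S: "SOL a x0 x1 x2 x3 x4 x5 x6 x7 x8"
  shows "SIG e (x0>0) (x1>0) (x2>0) (x3>0) (x4>0) (x6>0) \<in> sig_set 7 (ga_bracket a)"
  unfolding char[OF a0 a1] using S by blast

lemma memA:
  assumes a0: "a \<noteq> 0" and a1: "a \<noteq> 1"
  shows "SIG e (a<1) True (a>0) True True True \<in> sig_set 7 (ga_bracket a)"
proof -
  obtain x0 x1 x2 x3 x4 x5 x6 x7 x8 where S: "SOL a x0 x1 x2 x3 x4 x5 x6 x7 x8" and c: "cA a x0 x1 x2 x6"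
    using exA[OF a0 a1] by blast
  have p: "x3 > 0" "x4 > 0" using classify[OF a0 a1 S] by auto
  have "(x0>0) = (a<1)" "x1 > 0" "(x2>0) = (a>0)" "x6>0" using c unfolding cA_def by auto
  then show ?thesis using in_sigset[OF a0 a1 S, of e] p by simp
qed

lemma memB:
  assumes a0: "a \<noteq> 0" and a1: "a \<noteq> 1"
  shows "SIG e (a<1) False (a>0) True True False \<in> sig_set 7 (ga_bracket a)"
proof -
  obtain x0 x1 x2 x3 x4 x5 x6 x7 x8 where S: "SOL a x0 x1 x2 x3 x4 x5 x6 x7 x8" and c: "cB a x0 x1 x2 x6"
    using exB[OF a0 a1] by blast
  have p: "x3 > 0" "x4 > 0" using classify[OF a0 a1 S] by auto
  have "(x0>0) = (a<1)" "\<not> x1 > 0" "(x2>0) = (a>0)" "\<not> x6>0" using c unfolding cB_def by auto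
  then show ?thesis using in_sigset[OF a0 a1 S, of e] p by simp
qed

lemma memC:
  assumes a0: "a \<noteq> 0" and a1: "a \<noteq> 1" and a2: "a \<noteq> 1/2" and aK: "(1-2*a)^2 \<le> Kst"
  shows "SIG e (RR a) False (TT a) True True False \<in> sig_set 7 (ga_bracket a)"
proof -
  obtain x0 x1 x2 x3 x4 x5 x6 x7 x8 where S: "SOL a x0 x1 x2 x3 x4 x5 x6 x7 x8" and c: "cC a x0 x1 x2 x6"
    using exC[OF a0 a1 a2 aK] by blast
  have p: "x3 > 0" "x4 > 0" using classify[OF a0 a1 S] by auto
  have "(x0>0) = RR a" "\<not> x1 > 0" "(x2>0) = TT a" "\<not> x6>0" using c unfolding cC_def RR_def TT_def by auto
  then show ?thesis using in_sigset[OF a0 a1 S, of e] p by simp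
qed

lemma memD:
  assumes a0: "0 < a" and a1: "a < 1" and a2: "a \<noteq> 1/2"
  shows "SIG e (\<not> RR a) True (\<not> TT a) True True True \<in> sig_set 7 (ga_bracket a)"
proof -
  have a0': "a \<noteq> 0" and a1': "a \<noteq> 1" using a0 a1 by auto
  obtain x0 x1 x2 x3 x4 x5 x6 x7 x8 where S: "SOL a x0 x1 x2 x3 x4 x5 x6 x7 x8" and c: "cD a x0 x1 x2 x6"
    using exD[OF a0 a1 a2] by blast
  have p: "x3 > 0" "x4 > 0" using classify[OF a0' a1' S] by auto
  have "(x0>0) = (\<not> RR a)" "x1 > 0" "(x2>0) = (\<not> TT a)" "x6>0" using c unfolding cD_def RR_def TT_def by auto
  then show ?thesis using in_sigset[OF a0' a1' S, of e] p by simp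
qed

lemma memE:
  assumes a0: "a \<noteq> 0" and a1: "a \<noteq> 1" and a2: "a \<noteq> 1/2"
  shows "SIG e (RR a) True (TT a) True True True \<in> sig_set 7 (ga_bracket a)"
proof -
  obtain x0 x1 x2 x3 x4 x5 x6 x7 x8 where S: "SOL a x0 x1 x2 x3 x4 x5 x6 x7 x8" and c: "cE a x0 x1 x2 x6"
    using exE[OF a0 a1 a2] by blast
  have p: "x3 > 0" "x4 > 0" using classify[OF a0 a1 S] by auto
  have "(x0>0) = RR a" "x1 > 0" "(x2>0) = TT a" "x6>0" using c unfolding cE_def RR_def TT_def by auto
  then show ?thesis using in_sigset[OF a0 a1 S, of e] p by simp
qed

lemma memF:
  assumes a: "a = 1/2"
  shows "SIG e True True False True True True \<in> sig_set 7 (ga_bracket a)"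
    "SIG e False True True True True True \<in> sig_set 7 (ga_bracket a)"
proof -
  have a0: "a \<noteq> 0" and a1: "a \<noteq> 1" using a by auto
  obtain x0 x1 x2 x3 x4 x5 x6 x7 x8 where S: "SOL a x0 x1 x2 x3 x4 x5 x6 x7 x8"
    and c: "x0 > 0" "x1 > 0" "\<not> x2 > 0" "x6 > 0" using exF1[OF a] by blast
  have p: "x3 > 0" "x4 > 0" using classify[OF a0 a1 S] by auto
  show "SIG e True True False True True True \<in> sig_set 7 (ga_bracket a)"
    using in_sigset[OF a0 a1 S, of e] p c by simp
next
  have a0: "a \<noteq> 0" and a1: "a \<noteq> 1" using a by auto
  obtain x0 x1 x2 x3 x4 x5 x6 x7 x8 where S: "SOL a x0 x1 x2 x3 x4 x5 x6 x7 x8"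
    and c: "\<not> x0 > 0" "x1 > 0" "x2 > 0" "x6 > 0" using exF2[OF a] by blast
  have p: "x3 > 0" "x4 > 0" using classify[OF a0 a1 S] by auto
  show "SIG e False True True True True True \<in> sig_set 7 (ga_bracket a)"
    using in_sigset[OF a0 a1 S, of e] p c by simp
qed

lemma beta_gt: "sqrt (123 * sqrt 41 - 767) / 8 > (1/2::real)"
proof -
  have "123 * sqrt 41 - 767 > (16::real)" using sqrt41_gt by linarith
  then have "sqrt (123 * sqrt 41 - 767) > sqrt 16" by (simp only: real_sqrt_less_iff)
  then show ?thesis by simp
qed

lemma RRTT:
  "a < 0 \<Longrightarrow> RR a \<and> TT a"
  "0 < a \<Longrightarrow> a < 1/2 \<Longrightarrow> RR a \<and> \<not> TT a"
  "1/2 < a \<Longrightarrow> a < 1 \<Longrightarrow> \<not> RR a \<and> TT a"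
  "1 < a \<Longrightarrow> RR a \<and> TT a"
  unfolding RR_def TT_def by (auto simp: zero_less_divide_iff divide_less_0_iff)

lemma sq_lt1: "0 < a \<Longrightarrow> a < 1 \<Longrightarrow> (1-2*a)^2 < (1::real)"
proof -
  assume "0 < a" "a < 1"
  then have "a*(1-a) > 0" by simp
  moreover have "(1-2*a)^2 = 1 - 4*(a*(1-a))" by (simp add: power2_eq_square algebra_simps)
  ultimately show ?thesis by simp
qed

theorem lemma2p4:
  fixes a :: real
  assumes "a \<noteq> 0" and "a \<noteq> 1"
  defines "\<beta> \<equiv> sqrt (123 * sqrt 41 - 767) / 8"
  defines "S \<equiv> sig_set 7 (ga_bracket a)"
  shows "(a < 1/2 - \<beta> \<longrightarrow>
           S = {{}, {1,2,4,5,7}, {1,3,4,5}, {1,3,5,7}, {2,3,4}, {4,7}})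
       \<and> (1/2 - \<beta> \<le> a \<and> a < 0 \<longrightarrow>
           S = {{}, {1,2,4,5,7}, {1,2,5}, {1,3,4,5}, {1,3,5,7}, {2,3,4}, {2,3,7}, {4,7}})
       \<and> (0 < a \<and> a < 1/2 \<longrightarrow>
           S = {{}, {1,2,4,5,7}, {1,2,5}, {1,4,6}, {1,3,4,5}, {1,3,5,7}, {2,3,4}, {2,3,7},
                {3,4,5,6,7}, {4,7}})
       \<and> (a = 1/2 \<longrightarrow>
           S = {{}, {1,2,4,5,7}, {1,2,5}, {1,3,5,7}, {1,4,6}, {2,3,4}, {2,3,7}, {3,4,5,6,7}})
       \<and> (1/2 < a \<and> a < 1 \<longrightarrow>
           S = {{}, {1,2,3,4,6,7}, {1,2,4,5,7}, {1,2,5}, {1,3,5,7}, {1,4,6}, {2,3,4}, {2,3,7},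
                {2,4,5,6}, {3,4,5,6,7}})
       \<and> (1 < a \<and> a \<le> 1/2 + \<beta> \<longrightarrow>
           S = {{}, {1,2,3,4,6,7}, {1,2,5}, {1,3,5,7}, {1,4,6}, {2,3,7}, {2,4,5,6}, {3,4,5,6,7}})
       \<and> (1/2 + \<beta> < a \<longrightarrow>
           S = {{}, {1,2,3,4,6,7}, {1,3,5,7}, {1,4,6}, {2,4,5,6}, {3,4,5,6,7}})"
proof -
  note a0 = assms(1) and a1 = assms(2)
  have bg: "\<beta> > 1/2" unfolding \<beta>_def by (rule beta_gt)
  have bi: "(1/2 - \<beta> \<le> a \<and> a \<le> 1/2 + \<beta>) \<longleftrightarrow> (1-2*a)^2 \<le> Kst" unfolding \<beta>_def by (rule beta_iff)
  have K1: "Kst > 1" by (rule Kst_pos)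
  have sub: "S \<subseteq> OPTS a True \<union> OPTS a False" unfolding S_def by (rule sigset_sub[OF a0 a1])
  note mA = memA[OF a0 a1, of True, folded S_def] memA[OF a0 a1, of False, folded S_def]
  note mB = memB[OF a0 a1, of True, folded S_def] memB[OF a0 a1, of False, folded S_def]
  have r1: "a < 1/2 - \<beta> \<longrightarrow> S = {{}, {1,2,4,5,7}, {1,3,4,5}, {1,3,5,7}, {2,3,4}, {4,7}}"
  proof
    assume h: "a < 1/2 - \<beta>"
    have f: "a < 0" "a \<noteq> 1/2" "\<not> (1-2*a)^2 \<le> Kst" using h bg bi by auto
    note f_ne = f(2)
    have rr: "RR a \<and> TT a" using RRTT(1)[OF f(1)] .
    note mE = memE[OF a0 a1 f_ne, of True, folded S_def] memE[OF a0 a1 f_ne, of False, folded S_def]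
    show "S = {{}, {1,2,4,5,7}, {1,3,4,5}, {1,3,5,7}, {2,3,4}, {4,7}}" (is "S = ?L")
    proof
      show "S \<subseteq> ?L"
      proof (rule order_trans[OF sub])
        show "OPTS a True \<union> OPTS a False \<subseteq> ?L" using f rr by (simp add: OPTS_def SIG_def)
      qed
      show "?L \<subseteq> S"
        using mA mB mE f rr by (simp add: SIG_def)
    qed
  qed
  have r2: "1/2 - \<beta> \<le> a \<and> a < 0 \<longrightarrow> S = {{}, {1,2,4,5,7}, {1,2,5}, {1,3,4,5}, {1,3,5,7}, {2,3,4}, {2,3,7}, {4,7}}"
  proof
    assume h: "1/2 - \<beta> \<le> a \<and> a < 0"
    have f: "a < 0" "a \<noteq> 1/2" "(1-2*a)^2 \<le> Kst" using h bg bi by auto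
    note f_ne = f(2)
    note f_K = f(3)
    have rr: "RR a \<and> TT a" using RRTT(1)[OF f(1)] .
    note mC = memC[OF a0 a1 f_ne f_K, of True, folded S_def] memC[OF a0 a1 f_ne f_K, of False, folded S_def]
    note mE = memE[OF a0 a1 f_ne, of True, folded S_def] memE[OF a0 a1 f_ne, of False, folded S_def]
    show "S = {{}, {1,2,4,5,7}, {1,2,5}, {1,3,4,5}, {1,3,5,7}, {2,3,4}, {2,3,7}, {4,7}}" (is "S = ?L")
    proof
      show "S \<subseteq> ?L"
      proof (rule order_trans[OF sub])
        show "OPTS a True \<union> OPTS a False \<subseteq> ?L" using f rr by (simp add: OPTS_def SIG_def)
      qed
      show "?L \<subseteq> S"
        using mA mB mC mE f rr by (simp add: SIG_def)
    qed
  qed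
  have r3: "0 < a \<and> a < 1/2 \<longrightarrow> S = {{}, {1,2,4,5,7}, {1,2,5}, {1,4,6}, {1,3,4,5}, {1,3,5,7}, {2,3,4}, {2,3,7},
                {3,4,5,6,7}, {4,7}}"
  proof
    assume h: "0 < a \<and> a < 1/2"
    have f: "0 < a" "a < 1" "a \<noteq> 1/2" "(1-2*a)^2 \<le> Kst" "a < 1/2" using h sq_lt1[of a] K1 by auto
    note f_ne = f(3)
    note f_K = f(4)
    have rr: "RR a \<and> \<not> TT a" using RRTT(2)[OF f(1) f(5)] .
    note mC = memC[OF a0 a1 f_ne f_K, of True, folded S_def] memC[OF a0 a1 f_ne f_K, of False, folded S_def]
    note mD = memD[OF f(1) f(2) f(3), of True, folded S_def] memD[OF f(1) f(2) f(3), of False, folded S_def]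
    note mE = memE[OF a0 a1 f_ne, of True, folded S_def] memE[OF a0 a1 f_ne, of False, folded S_def]
    show "S = {{}, {1,2,4,5,7}, {1,2,5}, {1,4,6}, {1,3,4,5}, {1,3,5,7}, {2,3,4}, {2,3,7},
                {3,4,5,6,7}, {4,7}}" (is "S = ?L")
    proof
      show "S \<subseteq> ?L"
      proof (rule order_trans[OF sub])
        show "OPTS a True \<union> OPTS a False \<subseteq> ?L" using f rr by (simp add: OPTS_def SIG_def)
      qed
      show "?L \<subseteq> S"
        using mA mB mC mD mE f rr by (simp add: SIG_def)
    qed
  qed
  have r4: "a = 1/2 \<longrightarrow> S = {{}, {1,2,4,5,7}, {1,2,5}, {1,3,5,7}, {1,4,6}, {2,3,4}, {2,3,7}, {3,4,5,6,7}}"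
  proof
    assume h: "a = 1/2"
    have f: "a = 1/2" using h by auto
    have rr: True by simp
    note mF = memF[OF f(1), of True, folded S_def] memF[OF f(1), of False, folded S_def]
    show "S = {{}, {1,2,4,5,7}, {1,2,5}, {1,3,5,7}, {1,4,6}, {2,3,4}, {2,3,7}, {3,4,5,6,7}}" (is "S = ?L")
    proof
      show "S \<subseteq> ?L"
      proof (rule order_trans[OF sub])
        show "OPTS a True \<union> OPTS a False \<subseteq> ?L" using f rr by (simp add: OPTS_def SIG_def)
      qed
      show "?L \<subseteq> S"
        using mA mB mF f rr by (simp add: SIG_def)
    qed
  qed
  have r5: "1/2 < a \<and> a < 1 \<longrightarrow> S = {{}, {1,2,3,4,6,7}, {1,2,4,5,7}, {1,2,5}, {1,3,5,7}, {1,4,6}, {2,3,4}, {2,3,7},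
                {2,4,5,6}, {3,4,5,6,7}}"
  proof
    assume h: "1/2 < a \<and> a < 1"
    have f: "0 < a" "a < 1" "a \<noteq> 1/2" "(1-2*a)^2 \<le> Kst" "1/2 < a" using h sq_lt1[of a] K1 by auto
    note f_ne = f(3)
    note f_K = f(4)
    have rr: "\<not> RR a \<and> TT a" using RRTT(3)[OF f(5) f(2)] .
    note mC = memC[OF a0 a1 f_ne f_K, of True, folded S_def] memC[OF a0 a1 f_ne f_K, of False, folded S_def]
    note mD = memD[OF f(1) f(2) f(3), of True, folded S_def] memD[OF f(1) f(2) f(3), of False, folded S_def]
    note mE = memE[OF a0 a1 f_ne, of True, folded S_def] memE[OF a0 a1 f_ne, of False, folded S_def]
    show "S = {{}, {1,2,3,4,6,7}, {1,2,4,5,7}, {1,2,5}, {1,3,5,7}, {1,4,6}, {2,3,4}, {2,3,7},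
                {2,4,5,6}, {3,4,5,6,7}}" (is "S = ?L")
    proof
      show "S \<subseteq> ?L"
      proof (rule order_trans[OF sub])
        show "OPTS a True \<union> OPTS a False \<subseteq> ?L" using f rr by (simp add: OPTS_def SIG_def)
      qed
      show "?L \<subseteq> S"
        using mA mB mC mD mE f rr by (simp add: SIG_def)
    qed
  qed
  have r6: "1 < a \<and> a \<le> 1/2 + \<beta> \<longrightarrow> S = {{}, {1,2,3,4,6,7}, {1,2,5}, {1,3,5,7}, {1,4,6}, {2,3,7}, {2,4,5,6}, {3,4,5,6,7}}"
  proof
    assume h: "1 < a \<and> a \<le> 1/2 + \<beta>"
    have f: "1 < a" "a \<noteq> 1/2" "(1-2*a)^2 \<le> Kst" using h bg bi by auto
    note f_ne = f(2)
    note f_K = f(3)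
    have rr: "RR a \<and> TT a" using RRTT(4)[OF f(1)] .
    note mC = memC[OF a0 a1 f_ne f_K, of True, folded S_def] memC[OF a0 a1 f_ne f_K, of False, folded S_def]
    note mE = memE[OF a0 a1 f_ne, of True, folded S_def] memE[OF a0 a1 f_ne, of False, folded S_def]
    show "S = {{}, {1,2,3,4,6,7}, {1,2,5}, {1,3,5,7}, {1,4,6}, {2,3,7}, {2,4,5,6}, {3,4,5,6,7}}" (is "S = ?L")
    proof
      show "S \<subseteq> ?L"
      proof (rule order_trans[OF sub])
        show "OPTS a True \<union> OPTS a False \<subseteq> ?L" using f rr by (simp add: OPTS_def SIG_def)
      qed
      show "?L \<subseteq> S"
        using mA mB mC mE f rr by (simp add: SIG_def)
    qed
  qed
  have r7: "1/2 + \<beta> < a \<longrightarrow> S = {{}, {1,2,3,4,6,7}, {1,3,5,7}, {1,4,6}, {2,4,5,6}, {3,4,5,6,7}}"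
  proof
    assume h: "1/2 + \<beta> < a"
    have f: "1 < a" "a \<noteq> 1/2" "\<not> (1-2*a)^2 \<le> Kst" using h bg bi by auto
    note f_ne = f(2)
    have rr: "RR a \<and> TT a" using RRTT(4)[OF f(1)] .
    note mE = memE[OF a0 a1 f_ne, of True, folded S_def] memE[OF a0 a1 f_ne, of False, folded S_def]
    show "S = {{}, {1,2,3,4,6,7}, {1,3,5,7}, {1,4,6}, {2,4,5,6}, {3,4,5,6,7}}" (is "S = ?L")
    proof
      show "S \<subseteq> ?L"
      proof (rule order_trans[OF sub])
        show "OPTS a True \<union> OPTS a False \<subseteq> ?L" using f rr by (simp add: OPTS_def SIG_def)
      qed
      show "?L \<subseteq> S"
        using mA mB mE f rr by (simp add: SIG_def)
    qed
  qed
  show ?thesis using r1 r2 r3 r4 r5 r6 r7 by blast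
qed

end
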